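(* There is a deterministic algorithm in the $\mathsf{LOCAL}$ model that solves $\mathsf{Broadcast}$ on any $n$-vertex network in $O(n\log n\log N)$ time using $O(\log n\log N)$ energy.
   Context: Radio network: connected undirected graph with $n$ vertices; synchronized slots; each vertex transmits, listens or idles per slot, transmit/listen costing one unit of energy; energy = maximum per-vertex number of such slots. $\mathsf{LOCAL}$: a listener receives every message sent by its neighbors in that slot. Deterministic setting: vertices have distinct IDs in $\{1,\ldots,N\}$. $\mathsf{Broadcast}$: a source vertex holds a message that all vertices must learn. *)

theory Defs
  imports Complex_Main "HOL-Library.Multiset"
begin

definition radio_network :: "nat set \<Rightarrow> (nat \<Rightarrow> nat \<Rightarrow> bool) \<Rightarrow> bool" where
  "radio_network V E \<longleftrightarrow> finite V \<and> V \<noteq> {} \<and>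
     (\<forall>u v. E u v \<longrightarrow> u \<in> V \<and> v \<in> V) \<and>
     (\<forall>u v. E u v \<longrightarrow> E v u) \<and> (\<forall>u. \<not> E u u) \<and>
     (\<forall>u\<in>V. \<forall>v\<in>V. E\<^sup>*\<^sup>* u v)"

definition id_assignment :: "nat set \<Rightarrow> (nat \<Rightarrow> nat) \<Rightarrow> nat \<Rightarrow> bool" where
  "id_assignment V ID N \<longleftrightarrow> inj_on ID V \<and> ID ` V \<subseteq> {1..N}"

text \<open>Local state (and also message/packet contents): an optional copy of the
  broadcast message together with arbitrary auxiliary data.\<close>
type_synonym 'm lstate = "'m option \<times> nat list"

datatype 'p action = is_transmit: Transmit (payload: 'p) | Listen | Idle

text \<open>A deterministic algorithm: initial state from (n, N, own ID, message if source),
  action chosen from the current state, state update from the current state and what was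
  received (Some multiset of all messages sent by neighbours if the vertex listened,
  None otherwise), and an output function.\<close>
datatype 'm algo = Algo
  (a_init: "nat \<Rightarrow> nat \<Rightarrow> nat \<Rightarrow> 'm option \<Rightarrow> 'm lstate")
  (a_act: "'m lstate \<Rightarrow> 'm lstate action")
  (a_upd: "'m lstate \<Rightarrow> 'm lstate multiset option \<Rightarrow> 'm lstate")
  (a_out: "'m lstate \<Rightarrow> 'm option")

fun exec :: "'m algo \<Rightarrow> nat \<Rightarrow> nat set \<Rightarrow> (nat \<Rightarrow> nat \<Rightarrow> bool) \<Rightarrow> (nat \<Rightarrow> nat) \<Rightarrow> nat \<Rightarrow> 'm
    \<Rightarrow> nat \<Rightarrow> nat \<Rightarrow> 'm lstate" where
  "exec A N V E ID s m 0 = (\<lambda>v. a_init A (card V) N (ID v) (if v = s then Some m else None))"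
| "exec A N V E ID s m (Suc t) = (let cur = exec A N V E ID s m t in
     (\<lambda>v. a_upd A (cur v)
        (if a_act A (cur v) = Listen
         then Some (image_mset (\<lambda>u. payload (a_act A (cur u)))
                     (mset_set {u \<in> V. E v u \<and> is_transmit (a_act A (cur u))}))
         else None)))"

definition energy :: "'m algo \<Rightarrow> nat \<Rightarrow> nat set \<Rightarrow> (nat \<Rightarrow> nat \<Rightarrow> bool) \<Rightarrow> (nat \<Rightarrow> nat) \<Rightarrow> nat
    \<Rightarrow> 'm \<Rightarrow> nat \<Rightarrow> nat \<Rightarrow> nat" where
  "energy A N V E ID s m T v = card {t. t < T \<and> a_act A (exec A N V E ID s m t v) \<noteq> Idle}"

end

theory Submission
  imports Defs "HOL-Library.Countable"
begin

datatype fact = Me nat | Nb nat nat nat nat nat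
instance fact :: countable by countable_datatype

datatype aux = Aux (clk: nat) (me: nat) (nn: nat) (NNv: nat) (kn: "fact list") (acc: "fact list")
instance aux :: countable by countable_datatype

definition enc :: "aux \<Rightarrow> nat list" where "enc a = [to_nat a]"
definition dec :: "nat list \<Rightarrow> aux" where "dec l = from_nat (hd l)"
lemma dec_enc[simp]: "dec (enc a) = a"
  by (simp add: enc_def dec_def)

definition nbits :: "nat \<Rightarrow> nat" where "nbits N = (LEAST k. N < 2^k)"

lemma nbits_gt: "N < 2 ^ nbits N"
proof -
  have "N < 2 ^ N" by (rule less_exp)
  then show ?thesis unfolding nbits_def by (rule LeastI)
qed

lemma nbits_pos: "N \<ge> 1 \<Longrightarrow> nbits N \<ge> 1"
  using nbits_gt[of N] by (cases "nbits N") auto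

lemma nbits_le: "N \<ge> 1 \<Longrightarrow> 2 ^ (nbits N - 1) \<le> N"
proof -
  assume N: "N \<ge> 1"
  have "nbits N - 1 < nbits N" using nbits_pos[OF N] by simp
  then have "\<not> N < 2 ^ (nbits N - 1)" unfolding nbits_def by (rule not_less_Least)
  then show ?thesis by simp
qed

definition SLn :: "nat \<Rightarrow> nat" where "SLn n = 2 * n + 1"
definition RLn :: "nat \<Rightarrow> nat \<Rightarrow> nat" where "RLn n N = 2 * nbits N + (2 * nbits N + 1) * SLn n"

datatype mode = MEx nat nat nat | MSp nat nat | MSw nat nat nat

definition mode_of :: "nat \<Rightarrow> nat \<Rightarrow> nat \<Rightarrow> mode" where
  "mode_of n N t = (let L = nbits N; r = t div RLn n N; ofs = t mod RLn n N in
     if ofs < 2 * L then MEx r (ofs div 2) (ofs mod 2)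
     else (let q = ofs - 2 * L; sg = q div SLn n; p = q mod SLn n in
       if p = 0 then MSp r sg else MSw r sg (p - 1)))"

definition commit :: "nat \<Rightarrow> nat \<Rightarrow> nat \<Rightarrow> bool" where
  "commit n N t = (case mode_of n N t of MSw r sg w \<Rightarrow> even sg \<and> w + 1 = 2 * n | _ \<Rightarrow> False)"

section \<open>Knowledge functions\<close>

definition mem :: "fact set \<Rightarrow> nat set" where "mem K = {x. Me x \<in> K}"
definition gname :: "fact set \<Rightarrow> nat" where "gname K = Min (mem K)"
definition adjK :: "fact set \<Rightarrow> nat \<Rightarrow> nat \<Rightarrow> bool" where
  "adjK K x y = (x \<in> mem K \<and> y \<in> mem K \<and> (\<exists>r a b. Nb r x a y b \<in> K \<or> Nb r y a x b \<in> K))"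

fun ballK :: "fact set \<Rightarrow> nat \<Rightarrow> nat set" where
  "ballK K 0 = {gname K}"
| "ballK K (Suc k) = ballK K k \<union> {y. \<exists>x\<in>ballK K k. adjK K x y}"

definition lvl :: "fact set \<Rightarrow> nat \<Rightarrow> nat" where "lvl K x = (LEAST k. x \<in> ballK K k)"

definition cnames :: "fact set \<Rightarrow> nat \<Rightarrow> nat set" where
  "cnames K r = {c. \<exists>x y b. Nb r x c y b \<in> K}"
definition outn :: "fact set \<Rightarrow> nat \<Rightarrow> nat \<Rightarrow> nat set" where
  "outn K r c = {b. \<exists>x y. Nb r x c y b \<in> K \<and> b \<noteq> c}"
definition tgtK :: "fact set \<Rightarrow> nat \<Rightarrow> nat \<Rightarrow> nat option" where
  "tgtK K r c = (if outn K r c \<noteq> {} \<and> Min (outn K r c) < c then Some (Min (outn K r c)) else None)"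
definition hdb :: "nat \<Rightarrow> nat \<Rightarrow> nat" where "hdb a b = (LEAST l. a div 2 ^ Suc l = b div 2 ^ Suc l)"
definition leafc :: "fact set \<Rightarrow> nat \<Rightarrow> nat \<Rightarrow> nat set" where
  "leafc K r j = {c \<in> cnames K r. \<exists>t. tgtK K r c = Some t \<and> t \<notin> cnames K r \<and> hdb c t = j}"
definition isleaf :: "fact set \<Rightarrow> nat \<Rightarrow> nat \<Rightarrow> bool" where "isleaf K r j = (leafc K r j \<noteq> {})"
definition epK :: "fact set \<Rightarrow> nat \<Rightarrow> nat \<Rightarrow> nat \<times> nat" where
  "epK K r j = (let c = Min (leafc K r j); t = the (tgtK K r c);
      x = Min {x. \<exists>y. Nb r x c y t \<in> K}; y = Min {y. Nb r x c y t \<in> K} in (x, y))"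

section \<open>The algorithm\<close>

definition sweep_act :: "nat \<Rightarrow> nat \<Rightarrow> nat \<Rightarrow> bool option" where
  "sweep_act n w l = (if w < n then (if w + l + 1 = n then Some True else if w + l + 2 = n then Some False else None)
       else (if w - n = l then Some True else if w - n + 1 = l then Some False else None))"

definition jof :: "nat \<Rightarrow> nat" where "jof sg = (if odd sg then sg div 2 else sg div 2 - 1)"

definition isep :: "fact set \<Rightarrow> nat \<Rightarrow> nat \<Rightarrow> nat \<Rightarrow> bool" where
  "isep K r j x = (isleaf K r j \<and> fst (epK K r j) = x)"

type_synonym 'm st = "'m option \<times> nat list"

definition act :: "'m st \<Rightarrow> 'm st action" where
  "act q = (let a = dec (snd q); K = set (kn a) in
     case mode_of (nn a) (NNv a) (clk a) of
       MEx r b p \<Rightarrow> (if (me a div 2 ^ b) mod 2 = p then Transmit q else Listen)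
     | MSp r sg \<Rightarrow> (if sg = 0 then Idle
          else if odd sg then (if isep K r (jof sg) (me a) then Transmit q else Listen)
          else (if isep K r (jof sg) (me a) then Listen else Transmit q))
     | MSw r sg w \<Rightarrow> (case sweep_act (nn a) w (lvl K (me a)) of
          Some True \<Rightarrow> Transmit q | Some False \<Rightarrow> Listen | None \<Rightarrow> Idle))"

definition accepts :: "aux \<Rightarrow> 'm st \<Rightarrow> bool" where
  "accepts a q = (let b = dec (snd q); K = set (kn a); Kq = set (kn b) in
     case mode_of (nn a) (NNv a) (clk a) of
       MEx r bb p \<Rightarrow> False
     | MSp r sg \<Rightarrow> (if odd sg then isep Kq r (jof sg) (me b) \<and> snd (epK Kq r (jof sg)) = me a
                    else me b = snd (epK K r (jof sg)))
     | MSw r sg w \<Rightarrow> gname Kq = gname K)"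

definition newinfo :: "'m st \<Rightarrow> 'm st multiset option \<Rightarrow> 'm option \<times> fact set" where
  "newinfo q M = (let a = dec (snd q) in
     case M of None \<Rightarrow> (fst q, {})
     | Some M \<Rightarrow> (case mode_of (nn a) (NNv a) (clk a) of
          MEx r b p \<Rightarrow> (fst q, (\<lambda>q'. Nb r (me a) (gname (set (kn a))) (me (dec (snd q'))) (gname (set (kn (dec (snd q')))))) ` set_mset M)
        | _ \<Rightarrow> (let P = {q' \<in> set_mset M. accepts a q'} in
              (if fst q \<noteq> None then fst q else if (\<exists>q'\<in>P. fst q' \<noteq> None) then fst (SOME q'. q' \<in> P \<and> fst q' \<noteq> None) else None,
               \<Union>q'\<in>P. set (acc (dec (snd q')))))))"

definition upd :: "'m st \<Rightarrow> 'm st multiset option \<Rightarrow> 'm st" where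
  "upd q M = (let a = dec (snd q); ni = newinfo q M;
     acc' = acc a @ (SOME xs. set xs = snd ni);
     kn' = (if commit (nn a) (NNv a) (clk a) then acc' else kn a)
   in (fst ni, enc (Aux (Suc (clk a)) (me a) (nn a) (NNv a) kn' acc')))"

definition init :: "nat \<Rightarrow> nat \<Rightarrow> nat \<Rightarrow> 'm option \<Rightarrow> 'm st" where
  "init n N i mo = (mo, enc (Aux 0 i n N [Me i] [Me i]))"

definition ALG :: "'m algo" where "ALG = Algo init act upd fst"


lemma hdb_props:
  assumes "a \<noteq> (b::nat)"
  shows "a div 2 ^ Suc (hdb a b) = b div 2 ^ Suc (hdb a b)"
    and "a div 2 ^ hdb a b \<noteq> b div 2 ^ hdb a b"
proof -
  have ex: "\<exists>l. a div 2 ^ Suc l = b div 2 ^ Suc l"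
  proof
    have "(2::nat) ^ a \<le> 2 ^ Suc (a + b)" "(2::nat) ^ b \<le> 2 ^ Suc (a + b)"
      by (rule power_increasing; simp)+
    then have "a < 2 ^ Suc (a + b)" "b < 2 ^ Suc (a + b)"
      using less_exp[of a] less_exp[of b] by linarith+
    then show "a div 2 ^ Suc (a+b) = b div 2 ^ Suc (a+b)" by simp
  qed
  show 1: "a div 2 ^ Suc (hdb a b) = b div 2 ^ Suc (hdb a b)"
    unfolding hdb_def using ex by (rule LeastI_ex)
  show "a div 2 ^ hdb a b \<noteq> b div 2 ^ hdb a b"
  proof (cases "hdb a b")
    case 0 then show ?thesis using assms by simp
  next
    case (Suc k)
    have "k < hdb a b" using Suc by simp
    then have "\<not> a div 2 ^ Suc k = b div 2 ^ Suc k" unfolding hdb_def by (rule not_less_Least)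
    then show ?thesis using Suc by simp
  qed
qed

lemma hdb_parity:
  assumes "b < (a::nat)"
  shows "odd (a div 2 ^ hdb a b)" "even (b div 2 ^ hdb a b)"
    and "a div 2 ^ Suc (hdb a b) = b div 2 ^ Suc (hdb a b)"
proof -
  define h where "h = hdb a b"
  have "a div 2 ^ Suc h = b div 2 ^ Suc h"
    using hdb_props(1)[of a b] assms by (simp only: h_def)
  then have 1: "a div 2 ^ h div 2 = b div 2 ^ h div 2"
    by (metis div_mult2_eq power_Suc2)
  have 2: "a div 2 ^ h \<noteq> b div 2 ^ h" using hdb_props(2)[of a b] assms by (simp add: h_def)
  have 3: "b div 2 ^ h \<le> a div 2 ^ h" using assms by (simp add: div_le_mono)
  have "odd (a div 2 ^ h) \<and> even (b div 2 ^ h)"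
  proof -
    define A where "A = a div 2 ^ h"
    define B where "B = b div 2 ^ h"
    have e: "A = 2 * (A div 2) + A mod 2" "B = 2 * (B div 2) + B mod 2" by simp_all
    have "A mod 2 < 2" "B mod 2 < 2" by simp_all
    then have "A mod 2 = 1 \<and> B mod 2 = 0" using e 1 2 3 unfolding A_def[symmetric] B_def[symmetric] by linarith
    then show ?thesis by (simp add: A_def B_def odd_iff_mod_2_eq_one even_iff_mod_2_eq_zero)
  qed
  then show "odd (a div 2 ^ hdb a b)" "even (b div 2 ^ hdb a b)" by (auto simp: h_def)
  show "a div 2 ^ Suc (hdb a b) = b div 2 ^ Suc (hdb a b)" using hdb_props(1)[of a b] assms by simp
qed

lemma hdb_less:
  assumes "a < 2 ^ L" "b < 2 ^ L" "L \<ge> 1"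
  shows "hdb a b < L"
proof -
  have "a div 2 ^ Suc (L - 1) = b div 2 ^ Suc (L - 1)" using assms by simp
  then have "hdb a b \<le> L - 1" unfolding hdb_def by (rule Least_le)
  then show ?thesis using assms by simp
qed

definition part :: "nat set \<Rightarrow> (nat \<Rightarrow> nat set) \<Rightarrow> bool" where
  "part V g = (\<forall>v\<in>V. v \<in> g v \<and> g v \<subseteq> V \<and> (\<forall>y\<in>g v. g y = g v))"

definition conn :: "nat set \<Rightarrow> (nat \<Rightarrow> nat \<Rightarrow> bool) \<Rightarrow> (nat \<Rightarrow> nat set) \<Rightarrow> bool" where
  "conn V E g = (\<forall>v\<in>V. \<forall>a\<in>g v. \<forall>b\<in>g v. (\<lambda>x y. E x y \<and> x \<in> g v \<and> y \<in> g v)\<^sup>*\<^sup>* a b)"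

locale net =
  fixes V :: "nat set" and E :: "nat \<Rightarrow> nat \<Rightarrow> bool" and N :: nat
  assumes rn: "radio_network V E" and VN: "V \<subseteq> {1..N}" and two: "2 \<le> card V"
begin

lemma finV: "finite V" using rn by (simp add: radio_network_def)
lemma EV: "E x y \<Longrightarrow> x \<in> V \<and> y \<in> V" using rn by (simp add: radio_network_def)
lemma Esym: "E x y \<Longrightarrow> E y x" using rn by (simp add: radio_network_def)
lemma Eirr: "\<not> E x x" using rn by (simp add: radio_network_def)
lemma Vconn: "x \<in> V \<Longrightarrow> y \<in> V \<Longrightarrow> E\<^sup>*\<^sup>* x y" using rn by (simp add: radio_network_def)
lemma Vne: "V \<noteq> {}" using two by auto
lemma N1: "1 \<le> N" using VN Vne by auto
lemma Vbits: "x \<in> V \<Longrightarrow> x < 2 ^ nbits N"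
  using VN nbits_gt[of N] by force
lemma L1: "1 \<le> nbits N" using nbits_pos N1 by simp

lemma cross: "E\<^sup>*\<^sup>* a b \<Longrightarrow> a \<in> S \<Longrightarrow> b \<notin> S \<Longrightarrow> \<exists>x y. x \<in> S \<and> y \<notin> S \<and> E x y"
  by (induction rule: rtranclp_induct) auto

lemma has_nbr: assumes "x \<in> V" shows "\<exists>y. E x y"
proof -
  have "\<exists>y\<in>V. y \<noteq> x"
  proof (rule ccontr)
    assume "\<not> ?thesis"
    then have "V \<subseteq> {x}" by auto
    then have "card V \<le> 1" using card_mono[of "{x}" V] by simp
    then show False using two by simp
  qed
  then obtain y where "y \<in> V" "y \<noteq> x" by auto
  then have "E\<^sup>*\<^sup>* x y" using Vconn assms by simp
  from cross[OF this, of "{x}"] \<open>y \<noteq> x\<close> show ?thesis by auto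
qed

definition Nbf :: "(nat \<Rightarrow> nat set) \<Rightarrow> nat \<Rightarrow> nat \<Rightarrow> fact set" where
  "Nbf g r x = {Nb r x (Min (g x)) y (Min (g y)) | y. E x y}"

definition KK :: "(nat \<Rightarrow> fact set) \<Rightarrow> nat set \<Rightarrow> fact set" where
  "KK f S = (\<Union>x\<in>S. f x)"

definition mstep :: "(nat \<Rightarrow> fact set) \<Rightarrow> nat \<Rightarrow> nat \<Rightarrow> (nat \<Rightarrow> nat set) \<Rightarrow> nat \<Rightarrow> nat set" where
  "mstep f r j g v = (let lf = (\<lambda>u. isleaf (KK f (g u)) r j); ep = (\<lambda>u. epK (KK f (g u)) r j);
     H = (if lf v then g (snd (ep v)) else g v) in H \<union> (\<Union>{g u | u. u \<in> V \<and> lf u \<and> snd (ep u) \<in> H}))"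

primrec gsub :: "(nat \<Rightarrow> fact set) \<Rightarrow> nat \<Rightarrow> (nat \<Rightarrow> nat set) \<Rightarrow> nat \<Rightarrow> nat \<Rightarrow> nat set" where
  "gsub f r g 0 = g"
| "gsub f r g (Suc j) = mstep f r j (gsub f r g j)"

primrec hist :: "nat \<Rightarrow> (nat \<Rightarrow> nat set) \<times> (nat \<Rightarrow> fact set)" where
  "hist 0 = ((\<lambda>x. {x}), (\<lambda>x. {Me x}))"
| "hist (Suc r) = (let g = fst (hist r); f' = (\<lambda>x. snd (hist r) x \<union> Nbf g r x) in (gsub f' r g (nbits N), f'))"

definition grp :: "nat \<Rightarrow> nat \<Rightarrow> nat set" where "grp r = fst (hist r)"
definition fx :: "nat \<Rightarrow> nat \<Rightarrow> fact set" where "fx r = snd (hist r)"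

lemma grp0: "grp 0 x = {x}" by (simp add: grp_def)
lemma fx0: "fx 0 x = {Me x}" by (simp add: fx_def)
lemma fx_Suc: "fx (Suc r) x = fx r x \<union> Nbf (grp r) r x" by (simp add: fx_def grp_def Let_def)
lemma grp_Suc: "grp (Suc r) = gsub (fx (Suc r)) r (grp r) (nbits N)"
  by (simp add: fx_def grp_def Let_def)

lemma fx_Me: "Me y \<in> fx r x \<longleftrightarrow> y = x"
  by (induction r) (auto simp: fx0 fx_Suc Nbf_def)

lemma fx_Nb: "Nb r' x' c y b \<in> fx r x \<Longrightarrow> r' < r \<and> x' = x \<and> c = Min (grp r' x) \<and> b = Min (grp r' y) \<and> E x y"
  by (induction r) (auto simp: fx0 fx_Suc Nbf_def)

lemma fx_Nb_in: "r' < r \<Longrightarrow> E x y \<Longrightarrow> Nb r' x (Min (grp r' x)) y (Min (grp r' y)) \<in> fx r x"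
proof (induction r)
  case 0 then show ?case by simp
next
  case (Suc r) then show ?case by (cases "r' = r") (auto simp: fx_Suc Nbf_def)
qed

lemma fx_fin: "finite (fx r x)"
proof (induction r)
  case 0 then show ?case by (simp add: fx0)
next
  case (Suc r)
  have "Nbf (grp r) r x = (\<lambda>y. Nb r x (Min (grp r x)) y (Min (grp r y))) ` {y. E x y}"
    by (auto simp: Nbf_def)
  moreover have "finite {y. E x y}" using finV EV by (auto intro: finite_subset)
  ultimately show ?case using Suc by (simp add: fx_Suc)
qed

lemma KK_fin: "finite S \<Longrightarrow> finite (KK (fx r) S)"
  by (simp add: KK_def fx_fin)

lemma mem_KK: "mem (KK (fx r) S) = S"
  by (auto simp: mem_def KK_def fx_Me)

lemma gname_KK: "gname (KK (fx r) S) = Min S"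
  by (simp add: gname_def mem_KK)

lemma adjK_KK: "adjK (KK (fx r) S) a b \<longleftrightarrow> a \<in> S \<and> b \<in> S \<and> 0 < r \<and> E a b"
proof
  assume "adjK (KK (fx r) S) a b"
  then have "a \<in> S" "b \<in> S" "\<exists>r' aa bb. Nb r' a aa b bb \<in> KK (fx r) S \<or> Nb r' b aa a bb \<in> KK (fx r) S"
    unfolding adjK_def mem_KK by auto
  then show "a \<in> S \<and> b \<in> S \<and> 0 < r \<and> E a b"
    unfolding KK_def using fx_Nb Esym by fastforce
next
  assume a: "a \<in> S \<and> b \<in> S \<and> 0 < r \<and> E a b"
  then have "Nb 0 a (Min (grp 0 a)) b (Min (grp 0 b)) \<in> KK (fx r) S"
    unfolding KK_def using fx_Nb_in[of 0 r a b] by auto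
  then show "adjK (KK (fx r) S) a b" unfolding adjK_def mem_KK using a by blast
qed

end


context net
begin

lemma part_fin: "part V g \<Longrightarrow> v \<in> V \<Longrightarrow> finite (g v)"
  unfolding part_def by (meson finV finite_subset)

lemma part_Min_in: "part V g \<Longrightarrow> v \<in> V \<Longrightarrow> Min (g v) \<in> g v"
proof -
  assume a: "part V g" "v \<in> V"
  then have "v \<in> g v" unfolding part_def by blast
  then show ?thesis using part_fin[OF a] Min_in by blast
qed

lemma part_same: "part V g \<Longrightarrow> v \<in> V \<Longrightarrow> y \<in> g v \<Longrightarrow> g y = g v \<and> y \<in> V"
  unfolding part_def by blast

lemma part_Min_grp: "part V g \<Longrightarrow> v \<in> V \<Longrightarrow> g (Min (g v)) = g v"
  using part_Min_in part_same by blast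

lemma part_name_inj: "part V g \<Longrightarrow> x \<in> V \<Longrightarrow> y \<in> V \<Longrightarrow> Min (g x) = Min (g y) \<Longrightarrow> g x = g y"
  using part_Min_grp by metis

lemma part_Min_le: "part V g \<Longrightarrow> v \<in> V \<Longrightarrow> y \<in> g v \<Longrightarrow> Min (g v) \<le> y"
  using part_fin by simp

definition cn :: "nat \<Rightarrow> nat \<Rightarrow> nat" where "cn r x = Min (grp r x)"
definition outm :: "nat \<Rightarrow> nat \<Rightarrow> nat set" where
  "outm r x = {cn r y | x' y. x' \<in> grp r x \<and> E x' y \<and> cn r y \<noteq> cn r x}"
definition tgtm :: "nat \<Rightarrow> nat \<Rightarrow> nat option" where
  "tgtm r x = (if outm r x \<noteq> {} \<and> Min (outm r x) < cn r x then Some (Min (outm r x)) else None)"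

lemma outm_fin: "finite (outm r x)"
proof -
  have "outm r x \<subseteq> cn r ` V" unfolding outm_def using EV by blast
  then show ?thesis using finV finite_subset by blast
qed

lemma tgtm_SomeD: "tgtm r x = Some t \<Longrightarrow> t < cn r x \<and> (\<exists>x' y. x' \<in> grp r x \<and> E x' y \<and> cn r y = t)"
proof -
  assume a: "tgtm r x = Some t"
  then have ne: "outm r x \<noteq> {}" and t: "t = Min (outm r x)" "t < cn r x"
    unfolding tgtm_def by (auto split: if_splits)
  then have "t \<in> outm r x" using outm_fin Min_in by blast
  then show ?thesis using t unfolding outm_def by blast
qed

lemma tgtm_exists:
  assumes "x' \<in> grp r x" "E x' y" "cn r y < cn r x"
  shows "\<exists>t. tgtm r x = Some t \<and> t \<le> cn r y"
proof -
  have "cn r y \<in> outm r x" unfolding outm_def using assms by fastforce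
  then have "Min (outm r x) \<le> cn r y" using outm_fin by simp
  then show ?thesis unfolding tgtm_def using assms \<open>cn r y \<in> outm r x\<close> by auto
qed

definition Inv :: "nat \<Rightarrow> nat \<Rightarrow> (nat \<Rightarrow> nat set) \<Rightarrow> bool" where
  "Inv r j g = (part V g \<and> conn V E g \<and> (\<forall>v\<in>V. grp r v \<subseteq> g v) \<and>
     (\<forall>x\<in>V. cn r x \<noteq> Min (g x) \<longrightarrow> (\<exists>t. tgtm r x = Some t \<and> t \<in> cn r ` g x \<and> hdb (cn r x) t < j)) \<and>
     (\<forall>x\<in>V. \<forall>y\<in>g x. cn r x div 2 ^ j = cn r y div 2 ^ j) \<and>
     (\<forall>x\<in>V. cn r x = Min (g x) \<longrightarrow> (\<forall>t. tgtm r x = Some t \<longrightarrow> j \<le> hdb (cn r x) t)))"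

context
  fixes r :: nat
  assumes Pp: "part V (grp r)" and Pc: "conn V E (grp r)"
begin

lemma cn_eq_grp: "x \<in> V \<Longrightarrow> x' \<in> V \<Longrightarrow> cn r x = cn r x' \<Longrightarrow> grp r x = grp r x'"
  unfolding cn_def by (rule part_name_inj[OF Pp])

lemma tgtm_cong: "x \<in> V \<Longrightarrow> x' \<in> V \<Longrightarrow> cn r x = cn r x' \<Longrightarrow> tgtm r x = tgtm r x'"
proof -
  assume a: "x \<in> V" "x' \<in> V" "cn r x = cn r x'"
  then have "grp r x = grp r x'" by (rule cn_eq_grp)
  then have "outm r x = outm r x'" unfolding outm_def using a(3) by simp
  then show ?thesis unfolding tgtm_def using a(3) by simp
qed

lemma cn_in: "x \<in> V \<Longrightarrow> cn r x \<in> grp r x"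
  unfolding cn_def using part_Min_in[OF Pp] .

lemma cn_V: "x \<in> V \<Longrightarrow> cn r x \<in> V"
  using cn_in part_same[OF Pp] by blast

context
  fixes g assumes gp: "part V g" and gc: "\<forall>v\<in>V. grp r v \<subseteq> g v"
begin

lemma cn_Min: "v \<in> V \<Longrightarrow> cn r (Min (g v)) = Min (g v)"
proof -
  assume v: "v \<in> V"
  define m where "m = Min (g v)"
  have m1: "m \<in> g v" using part_Min_in[OF gp v] by (simp add: m_def)
  have m: "m \<in> g v" "m \<in> V" using m1 part_same[OF gp v m1] by auto
  have "grp r m \<subseteq> g m" using gc m by auto
  also have "g m = g v" using part_same[OF gp v m(1)] by simp
  finally have sub: "grp r m \<subseteq> g v" .
  have "m \<in> grp r m" using Pp m(2) unfolding part_def by blast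
  then have "cn r m \<le> m" unfolding cn_def using part_fin[OF Pp m(2)] by simp
  moreover have "cn r m \<in> g v" using cn_in[OF m(2)] sub by blast
  then have "m \<le> cn r m" unfolding m_def by (rule part_Min_le[OF gp v])
  ultimately show ?thesis by (simp add: m_def)
qed

lemma cn_ge: "v \<in> V \<Longrightarrow> x \<in> g v \<Longrightarrow> Min (g v) \<le> cn r x"
proof -
  assume v: "v \<in> V" and x: "x \<in> g v"
  have xV: "x \<in> V" using part_same[OF gp v x] by simp
  have "cn r x \<in> g x" using cn_in[OF xV] gc xV by auto
  then have "cn r x \<in> g v" using part_same[OF gp v x] by simp
  then show ?thesis using part_Min_le[OF gp v] by simp
qed

lemma in_grp_iff: "x \<in> g v \<Longrightarrow> v \<in> V \<Longrightarrow> x' \<in> g v \<and> cn r x' = cn r x \<longleftrightarrow> x' \<in> grp r x"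
proof -
  assume x: "x \<in> g v" and v: "v \<in> V"
  have xV: "x \<in> V" using part_same[OF gp v x] by simp
  show ?thesis
  proof
    assume a: "x' \<in> g v \<and> cn r x' = cn r x"
    then have "x' \<in> V" using part_same[OF gp v, of x'] by blast
    then have "grp r x' = grp r x" using cn_eq_grp[OF _ xV] a by blast
    moreover have "x' \<in> grp r x'" using Pp \<open>x' \<in> V\<close> unfolding part_def by blast
    ultimately show "x' \<in> grp r x" by simp
  next
    assume a: "x' \<in> grp r x"
    then have "grp r x' = grp r x" "x' \<in> V" using part_same[OF Pp xV a] by auto
    moreover have "x' \<in> g x" using gc xV a by auto
    moreover have "g x = g v" using part_same[OF gp v x] by simp
    ultimately show "x' \<in> g v \<and> cn r x' = cn r x" by (simp add: cn_def)
  qed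
qed

abbreviation "KS v \<equiv> KK (fx (Suc r)) (g v)"

lemma Nb_KS: "v \<in> V \<Longrightarrow> Nb r x c y b \<in> KS v \<longleftrightarrow> x \<in> g v \<and> E x y \<and> c = cn r x \<and> b = cn r y"
proof
  assume "Nb r x c y b \<in> KS v"
  then show "x \<in> g v \<and> E x y \<and> c = cn r x \<and> b = cn r y"
    unfolding KK_def cn_def using fx_Nb by fastforce
next
  assume "x \<in> g v \<and> E x y \<and> c = cn r x \<and> b = cn r y"
  then show "Nb r x c y b \<in> KS v" unfolding KK_def cn_def using fx_Nb_in[of r "Suc r" x y] by auto
qed

lemma cnames_KS: "v \<in> V \<Longrightarrow> cnames (KS v) r = cn r ` g v"
proof -
  assume v: "v \<in> V"
  have "c \<in> cnames (KS v) r \<longleftrightarrow> c \<in> cn r ` g v" for c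
  proof
    assume "c \<in> cnames (KS v) r"
    then obtain x y b where "Nb r x c y b \<in> KS v" unfolding cnames_def by blast
    then show "c \<in> cn r ` g v" using Nb_KS[OF v] by blast
  next
    assume "c \<in> cn r ` g v"
    then obtain x where x: "x \<in> g v" "c = cn r x" by blast
    then have "x \<in> V" using part_same[OF gp v] by blast
    then obtain y where "E x y" using has_nbr by blast
    then have "Nb r x c y (cn r y) \<in> KS v" using Nb_KS[OF v] x by blast
    then show "c \<in> cnames (KS v) r" unfolding cnames_def by blast
  qed
  then show ?thesis by blast
qed

lemma outn_KS: "v \<in> V \<Longrightarrow> x \<in> g v \<Longrightarrow> outn (KS v) r (cn r x) = outm r x"
proof -
  assume v: "v \<in> V" and x: "x \<in> g v"
  have "b \<in> outn (KS v) r (cn r x) \<longleftrightarrow> b \<in> outm r x" for b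
  proof -
    have "b \<in> outn (KS v) r (cn r x) \<longleftrightarrow> (\<exists>x' y. x' \<in> g v \<and> cn r x' = cn r x \<and> E x' y \<and> b = cn r y \<and> b \<noteq> cn r x)"
      unfolding outn_def mem_Collect_eq Nb_KS[OF v] by (metis (no_types, lifting))
    also have "\<dots> \<longleftrightarrow> (\<exists>x' y. x' \<in> grp r x \<and> E x' y \<and> b = cn r y \<and> b \<noteq> cn r x)"
      using in_grp_iff[OF x v] by blast
    also have "\<dots> \<longleftrightarrow> b \<in> outm r x" unfolding outm_def by blast
    finally show ?thesis .
  qed
  then show ?thesis by blast
qed

lemma tgtK_KS: "v \<in> V \<Longrightarrow> x \<in> g v \<Longrightarrow> tgtK (KS v) r (cn r x) = tgtm r x"
  unfolding tgtK_def tgtm_def using outn_KS by simp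

lemma Min_gV: "v \<in> V \<Longrightarrow> Min (g v) \<in> g v \<and> Min (g v) \<in> V"
  using part_Min_in[OF gp] part_same[OF gp] by blast

lemma leafc_KS:
  assumes v: "v \<in> V"
    and I2: "\<forall>x\<in>V. cn r x \<noteq> Min (g x) \<longrightarrow> (\<exists>t. tgtm r x = Some t \<and> t \<in> cn r ` g x \<and> hdb (cn r x) t < j)"
  shows "leafc (KS v) r j = (if \<exists>t. tgtm r (Min (g v)) = Some t \<and> hdb (Min (g v)) t = j then {Min (g v)} else {})"
proof -
  define m where "m = Min (g v)"
  have m: "m \<in> g v" "m \<in> V" "cn r m = m" using Min_gV[OF v] cn_Min[OF v] by (auto simp: m_def)
  have "c \<in> leafc (KS v) r j \<longleftrightarrow> c = m \<and> (\<exists>t. tgtm r m = Some t \<and> hdb m t = j)" for c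
  proof
    assume "c \<in> leafc (KS v) r j"
    then obtain t where c: "c \<in> cn r ` g v" "tgtK (KS v) r c = Some t" "t \<notin> cn r ` g v" "hdb c t = j"
      unfolding leafc_def cnames_KS[OF v] by blast
    then obtain x where x: "x \<in> g v" "c = cn r x" by blast
    have xV: "x \<in> V" "g x = g v" using part_same[OF gp v x(1)] by auto
    have tx: "tgtm r x = Some t" using c(2) tgtK_KS[OF v x(1)] x(2) by simp
    have "cn r x = Min (g x)"
    proof (rule ccontr)
      assume "cn r x \<noteq> Min (g x)"
      then obtain t' where "tgtm r x = Some t'" "t' \<in> cn r ` g x" using I2 xV(1) by blast
      then show False using tx c(3) xV(2) by simp
    qed
    then have "c = m" using x(2) xV(2) by (simp add: m_def)
    moreover have "tgtm r m = Some t" using tgtm_cong[OF xV(1) m(2)] tx \<open>c = m\<close> x(2) m(3) by simp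
    ultimately show "c = m \<and> (\<exists>t. tgtm r m = Some t \<and> hdb m t = j)" using c(4) by blast
  next
    assume a: "c = m \<and> (\<exists>t. tgtm r m = Some t \<and> hdb m t = j)"
    then obtain t where t: "tgtm r m = Some t" "hdb m t = j" by blast
    have "t < m" using tgtm_SomeD[OF t(1)] m(3) by simp
    have "t \<notin> cn r ` g v"
    proof
      assume "t \<in> cn r ` g v"
      then obtain y where "y \<in> g v" "t = cn r y" by blast
      then have "m \<le> t" using cn_ge[OF v] by (simp add: m_def)
      then show False using \<open>t < m\<close> by simp
    qed
    moreover have "tgtK (KS v) r c = Some t" using tgtK_KS[OF v m(1)] m(3) a t(1) by simp
    moreover have "c \<in> cn r ` g v" using m a by force
    ultimately show "c \<in> leafc (KS v) r j" unfolding leafc_def cnames_KS[OF v] using a t(2) by blast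
  qed
  then show ?thesis by (auto simp: m_def)
qed

lemma ep_KS:
  assumes v: "v \<in> V" and t: "tgtm r (Min (g v)) = Some t"
    and lc: "leafc (KS v) r j = {Min (g v)}"
  shows "fst (epK (KS v) r j) \<in> g v \<and> E (fst (epK (KS v) r j)) (snd (epK (KS v) r j))
     \<and> cn r (snd (epK (KS v) r j)) = t \<and> cn r (fst (epK (KS v) r j)) = Min (g v)"
proof -
  define c where "c = Min (g v)"
  have cm: "c \<in> g v" "c \<in> V" "cn r c = c" using Min_gV[OF v] cn_Min[OF v] by (auto simp: c_def)
  have tK: "tgtK (KS v) r c = Some t" using tgtK_KS[OF v cm(1)] cm(3) t by (simp add: c_def)
  define xs where "xs = {x. \<exists>y. Nb r x c y t \<in> KS v}"
  define x0 where "x0 = Min xs"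
  define ys where "ys = {y. Nb r x0 c y t \<in> KS v}"
  define y0 where "y0 = Min ys"
  have ep: "epK (KS v) r j = (x0, y0)"
    unfolding epK_def Let_def lc using tK by (simp add: c_def[symmetric] x0_def xs_def y0_def ys_def)
  obtain x' y where xy: "x' \<in> grp r c" "E x' y" "cn r y = t" using tgtm_SomeD[OF t] by (auto simp: c_def)
  have x'V: "x' \<in> V" using xy(2) EV by blast
  have "x' \<in> g v \<and> cn r x' = cn r c" using in_grp_iff[OF cm(1) v] xy(1) by blast
  then have "Nb r x' c y t \<in> KS v" using Nb_KS[OF v] xy cm(3) by simp
  then have "x' \<in> xs" by (auto simp: xs_def)
  moreover have "xs \<subseteq> g v" using Nb_KS[OF v] by (auto simp: xs_def)
  moreover have "finite (g v)" using part_fin[OF gp v] .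
  ultimately have "finite xs" "xs \<noteq> {}" using finite_subset by blast+
  then have "x0 \<in> xs" unfolding x0_def by (rule Min_in)
  then obtain y1 where y1: "Nb r x0 c y1 t \<in> KS v" by (auto simp: xs_def)
  then have "y1 \<in> ys" by (simp add: ys_def)
  moreover have "ys \<subseteq> V" using Nb_KS[OF v] EV by (auto simp: ys_def)
  ultimately have "finite ys" "ys \<noteq> {}" using finite_subset finV by blast+
  then have "y0 \<in> ys" unfolding y0_def by (rule Min_in)
  then have "Nb r x0 c y0 t \<in> KS v" by (simp add: ys_def)
  then have "x0 \<in> g v \<and> E x0 y0 \<and> c = cn r x0 \<and> t = cn r y0" using Nb_KS[OF v] by blast
  then show ?thesis using ep by (simp add: c_def)
qed

end

end

end


lemma rtranclp_sym:
  assumes "\<And>x y. R x y \<Longrightarrow> R y x" "R\<^sup>*\<^sup>* a b" shows "R\<^sup>*\<^sup>* b a"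
  using assms(2) by (induction rule: rtranclp_induct) (auto intro: converse_rtranclp_into_rtranclp assms(1))

context net
begin

context
  fixes r :: nat
  assumes Pp: "part V (grp r)" and Pc: "conn V E (grp r)"
begin

context
  fixes g j assumes inv: "Inv r j g"
begin

lemma gp: "part V g" using inv by (simp add: Inv_def)
lemma gself: "v \<in> V \<Longrightarrow> v \<in> g v" using gp unfolding part_def by blast
lemma gcn: "conn V E g" using inv by (simp add: Inv_def)
lemma gc: "\<forall>v\<in>V. grp r v \<subseteq> g v" using inv by (simp add: Inv_def)
lemma I2: "\<forall>x\<in>V. cn r x \<noteq> Min (g x) \<longrightarrow> (\<exists>t. tgtm r x = Some t \<and> t \<in> cn r ` g x \<and> hdb (cn r x) t < j)"
  using inv by (simp add: Inv_def)
lemma I3: "\<forall>x\<in>V. \<forall>y\<in>g x. cn r x div 2 ^ j = cn r y div 2 ^ j"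
  using inv by (simp add: Inv_def)
lemma I4: "\<forall>x\<in>V. cn r x = Min (g x) \<longrightarrow> (\<forall>t. tgtm r x = Some t \<longrightarrow> j \<le> hdb (cn r x) t)"
  using inv by (simp add: Inv_def)

abbreviation "F \<equiv> fx (Suc r)"
definition lf :: "nat \<Rightarrow> bool" where "lf u = isleaf (KK F (g u)) r j"
definition ep :: "nat \<Rightarrow> nat \<times> nat" where "ep u = epK (KK F (g u)) r j"

lemmas leafc' = leafc_KS[OF Pp Pc gp gc]
lemmas ep' = ep_KS[OF Pp Pc gp gc]
lemmas cn_Min' = cn_Min[OF Pp Pc gp gc]
lemmas cn_ge' = cn_ge[OF Pp Pc gp gc]
lemmas Min_gV' = Min_gV[OF Pp Pc gp gc]
lemmas tgtm_cong' = tgtm_cong[OF Pp Pc]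
lemmas tgtm_SomeD' = tgtm_SomeD

lemma lf_iff: "v \<in> V \<Longrightarrow> lf v \<longleftrightarrow> (\<exists>t. tgtm r (Min (g v)) = Some t \<and> hdb (Min (g v)) t = j)"
  unfolding lf_def isleaf_def using leafc'[OF _ I2] by simp

lemma ep_facts:
  assumes v: "v \<in> V" and l: "lf v"
  shows "\<exists>t. tgtm r (Min (g v)) = Some t \<and> hdb (Min (g v)) t = j \<and> t < Min (g v) \<and>
     fst (ep v) \<in> g v \<and> E (fst (ep v)) (snd (ep v)) \<and> cn r (snd (ep v)) = t \<and> snd (ep v) \<in> V \<and> snd (ep v) \<notin> g v"
proof -
  obtain t where t: "tgtm r (Min (g v)) = Some t" "hdb (Min (g v)) t = j" using lf_iff[OF v] l by blast
  have lc: "leafc (KK F (g v)) r j = {Min (g v)}" using leafc'[OF v I2] t by auto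
  have e: "fst (ep v) \<in> g v" "E (fst (ep v)) (snd (ep v))" "cn r (snd (ep v)) = t"
    using ep'[OF v t(1) lc] by (auto simp: ep_def)
  have tl: "t < Min (g v)" using tgtm_SomeD[OF t(1)] cn_Min'[OF v] by simp
  have "snd (ep v) \<in> V" using e(2) EV by blast
  moreover have "snd (ep v) \<notin> g v"
  proof
    assume "snd (ep v) \<in> g v"
    then have "Min (g v) \<le> t" using cn_ge'[OF v] e(3) by force
    then show False using tl by simp
  qed
  ultimately show ?thesis using t e tl by blast
qed

lemma grp_const: "v \<in> V \<Longrightarrow> y \<in> g v \<Longrightarrow> lf y = lf v \<and> ep y = ep v \<and> y \<in> V \<and> g y = g v"
  using part_same[OF gp, of v y] by (simp add: lf_def ep_def)

lemma center_nonleaf: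
  assumes v: "v \<in> V" and l: "lf v" shows "\<not> lf (snd (ep v))"
proof
  define y0 where "y0 = snd (ep v)"
  assume ly: "lf y0"
  obtain t where t: "tgtm r (Min (g v)) = Some t" "hdb (Min (g v)) t = j" "t < Min (g v)"
    "cn r y0 = t" "y0 \<in> V" using ep_facts[OF v l] by (auto simp: y0_def)
  have ev: "even (t div 2 ^ j)" using hdb_parity(2)[OF t(3)] t(2) by simp
  obtain t' where t': "tgtm r (Min (g y0)) = Some t'" "hdb (Min (g y0)) t' = j" "t' < Min (g y0)"
    using ep_facts[OF t(5) ly] by blast
  have od: "odd (Min (g y0) div 2 ^ j)" using hdb_parity(1)[OF t'(3)] t'(2) by simp
  have "cn r y0 div 2 ^ j = cn r (Min (g y0)) div 2 ^ j" using I3 t(5) Min_gV'[OF t(5)] by blast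
  then have "t div 2 ^ j = Min (g y0) div 2 ^ j" using cn_Min'[OF t(5)] t(4) by simp
  then show False using ev od by simp
qed

definition H :: "nat \<Rightarrow> nat set" where "H v = (if lf v then g (snd (ep v)) else g v)"

lemma H_grp: "v \<in> V \<Longrightarrow> \<exists>h\<in>V. H v = g h \<and> \<not> lf h"
  using ep_facts center_nonleaf unfolding H_def by (cases "lf v") auto

abbreviation "g' \<equiv> mstep F r j g"

lemma mstep_eq: "g' v = H v \<union> \<Union>{g u | u. u \<in> V \<and> lf u \<and> snd (ep u) \<in> H v}"
  unfolding mstep_def H_def lf_def ep_def Let_def by simp

lemma g'_cases: "y \<in> g' v \<Longrightarrow> y \<in> H v \<or> (\<exists>u\<in>V. lf u \<and> snd (ep u) \<in> H v \<and> y \<in> g u)"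
  unfolding mstep_eq by blast

lemma H_same: assumes v: "v \<in> V" and y: "y \<in> g' v" shows "H y = H v \<and> y \<in> V"
proof -
  obtain h where h: "h \<in> V" "H v = g h" "\<not> lf h" using H_grp[OF v] by blast
  from g'_cases[OF y] show ?thesis
  proof
    assume "y \<in> H v"
    then have "y \<in> g h" using h by simp
    then have "lf y = lf h" "g y = g h" "y \<in> V" using grp_const[OF h(1)] by auto
    then show ?thesis using h by (simp add: H_def)
  next
    assume "\<exists>u\<in>V. lf u \<and> snd (ep u) \<in> H v \<and> y \<in> g u"
    then obtain u where u: "u \<in> V" "lf u" "snd (ep u) \<in> H v" "y \<in> g u" by blast
    have yc: "lf y = lf u" "ep y = ep u" "y \<in> V" using grp_const[OF u(1) u(4)] by auto
    have "snd (ep u) \<in> g h" using u(3) h by simp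
    then have "g (snd (ep u)) = g h" using grp_const[OF h(1)] by blast
    then have "H y = g h" using yc u(2) by (simp add: H_def)
    then show ?thesis using h yc by simp
  qed
qed

lemma g'_same: "v \<in> V \<Longrightarrow> y \<in> g' v \<Longrightarrow> g' y = g' v \<and> y \<in> V"
proof -
  assume a: "v \<in> V" "y \<in> g' v"
  have "H y = H v" "y \<in> V" using H_same[OF a] by auto
  then show ?thesis unfolding mstep_eq by simp
qed

lemma g_sub_g': assumes v: "v \<in> V" shows "g v \<subseteq> g' v"
proof (cases "lf v")
  case True
  have "snd (ep v) \<in> V" using ep_facts[OF v True] by blast
  then have "snd (ep v) \<in> g (snd (ep v))" using gp unfolding part_def by blast
  then have "snd (ep v) \<in> H v" using True unfolding H_def by simp
  then show ?thesis unfolding mstep_eq using v True by blast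
next
  case False then show ?thesis unfolding mstep_eq H_def by auto
qed

lemma H_sub_g': "H v \<subseteq> g' v" unfolding mstep_eq by blast

lemma v_in_g': "v \<in> V \<Longrightarrow> v \<in> g' v"
  using g_sub_g' gp unfolding part_def by blast

lemma Min_g': assumes v: "v \<in> V" shows "Min (g' v) = Min (H v)"
proof -
  obtain h where h: "h \<in> V" "H v = g h" "\<not> lf h" using H_grp[OF v] by blast
  have fin: "finite (g' v)" using g'_same[OF v] finV by (meson finite_subset subsetI)
  have mh: "Min (g h) \<in> g' v" using Min_gV'[OF h(1)] h(2) H_sub_g' by blast
  have lb: "Min (g h) \<le> z" if z: "z \<in> g' v" for z
  proof -
    from g'_cases[OF z] show ?thesis
    proof
      assume "z \<in> H v" then show ?thesis using h part_Min_le[OF gp h(1)] by simp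
    next
      assume "\<exists>u\<in>V. lf u \<and> snd (ep u) \<in> H v \<and> z \<in> g u"
      then obtain u where u: "u \<in> V" "lf u" "snd (ep u) \<in> H v" "z \<in> g u" by blast
      obtain t where t: "t < Min (g u)" "cn r (snd (ep u)) = t" using ep_facts[OF u(1) u(2)] by blast
      have "Min (g h) \<le> t" using cn_ge'[OF h(1)] u(3) h(2) t(2) by force
      moreover have "Min (g u) \<le> z" using part_Min_le[OF gp u(1) u(4)] .
      ultimately show ?thesis using t by simp
    qed
  qed
  have "Min (g' v) = Min (g h)"
    using fin mh lb by (meson Min_eqI)
  then show ?thesis using h by simp
qed

lemma part_g': "part V g'"
  unfolding part_def using v_in_g' g'_same by blast

lemma coarse_g': "\<forall>v\<in>V. grp r v \<subseteq> g' v"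
  using gc g_sub_g' by blast

lemma conn_g': "conn V E g'"
  unfolding conn_def
proof (intro ballI)
  fix v a b assume v: "v \<in> V" and a: "a \<in> g' v" and b: "b \<in> g' v"
  define R where "R = (\<lambda>x y. E x y \<and> x \<in> g' v \<and> y \<in> g' v)"
  have Rs: "R x y \<Longrightarrow> R y x" for x y using Esym unfolding R_def by blast
  obtain h where h: "h \<in> V" "H v = g h" "\<not> lf h" using H_grp[OF v] by blast
  have gh: "g h \<subseteq> g' v" using h(2) H_sub_g' by blast
  have inner: "R\<^sup>*\<^sup>* x y" if "x \<in> g w" "y \<in> g w" "w \<in> V" "g w \<subseteq> g' v" for x y w
  proof -
    have "(\<lambda>x y. E x y \<and> x \<in> g w \<and> y \<in> g w)\<^sup>*\<^sup>* x y" using gcn that unfolding conn_def by blast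
    then show ?thesis by (rule rtranclp_mono[THEN predicate2D, rotated]) (use that in \<open>auto simp: R_def\<close>)
  qed
  have hh: "h \<in> g h" using gp h(1) unfolding part_def by blast
  have reach: "R\<^sup>*\<^sup>* h z" if z: "z \<in> g' v" for z
  proof -
    from g'_cases[OF z] show ?thesis
    proof
      assume "z \<in> H v" then show ?thesis using inner[OF hh _ h(1) gh] h(2) by simp
    next
      assume "\<exists>u\<in>V. lf u \<and> snd (ep u) \<in> H v \<and> z \<in> g u"
      then obtain u where u: "u \<in> V" "lf u" "snd (ep u) \<in> H v" "z \<in> g u" by blast
      have e: "fst (ep u) \<in> g u" "E (fst (ep u)) (snd (ep u))" using ep_facts[OF u(1) u(2)] by blast+
      have gu: "g u \<subseteq> g' v" unfolding mstep_eq using u by blast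
      have 1: "R\<^sup>*\<^sup>* h (snd (ep u))" using inner[OF hh _ h(1) gh] u(3) h(2) by simp
      have 2: "R (snd (ep u)) (fst (ep u))" unfolding R_def using e gu u(3) H_sub_g' Esym by blast
      have 3: "R\<^sup>*\<^sup>* (fst (ep u)) z" using inner[OF e(1) u(4) u(1) gu] .
      show ?thesis using 1 2 3 by (meson rtranclp.rtrancl_into_rtrancl rtranclp_trans)
    qed
  qed
  have "R\<^sup>*\<^sup>* a h" using rtranclp_sym[OF Rs reach[OF a]] by blast
  then show "(\<lambda>x y. E x y \<and> x \<in> g' v \<and> y \<in> g' v)\<^sup>*\<^sup>* a b"
    using reach[OF b] unfolding R_def by (meson rtranclp_trans)
qed

lemma div_Suc_eq: "(a::nat) div 2 ^ j = b div 2 ^ j \<Longrightarrow> a div 2 ^ Suc j = b div 2 ^ Suc j"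
  by (metis div_mult2_eq power_Suc2)

lemma I3_key: assumes x: "x \<in> V" shows "cn r x div 2 ^ Suc j = Min (H x) div 2 ^ Suc j"
proof (cases "lf x")
  case False
  have "cn r x div 2 ^ j = cn r (Min (g x)) div 2 ^ j" using I3 x Min_gV'[OF x] by blast
  then have "cn r x div 2 ^ j = Min (g x) div 2 ^ j" using cn_Min'[OF x] by simp
  then have "cn r x div 2 ^ Suc j = Min (g x) div 2 ^ Suc j" by (rule div_Suc_eq)
  moreover have "H x = g x" using False by (simp add: H_def)
  ultimately show ?thesis by simp
next
  case True
  define y0 where "y0 = snd (ep x)"
  obtain t where t: "hdb (Min (g x)) t = j" "t < Min (g x)" "cn r y0 = t" "y0 \<in> V"
    using ep_facts[OF x True] by (auto simp: y0_def)
  have 1: "cn r x div 2 ^ j = Min (g x) div 2 ^ j"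
    using I3 x Min_gV'[OF x] cn_Min'[OF x] by metis
  have 2: "Min (g x) div 2 ^ Suc j = t div 2 ^ Suc j" using hdb_parity(3)[OF t(2)] t(1) by simp
  have 3: "t div 2 ^ j = Min (g y0) div 2 ^ j"
    using I3 t(4) Min_gV'[OF t(4)] cn_Min'[OF t(4)] t(3) by metis
  have a: "cn r x div 2 ^ Suc j = Min (g x) div 2 ^ Suc j" by (rule div_Suc_eq[OF 1])
  have c: "t div 2 ^ Suc j = Min (g y0) div 2 ^ Suc j" by (rule div_Suc_eq[OF 3])
  have "H x = g y0" using True by (simp add: H_def y0_def)
  then show ?thesis using a 2 c by simp
qed

lemma I3_g': "\<forall>x\<in>V. \<forall>y\<in>g' x. cn r x div 2 ^ Suc j = cn r y div 2 ^ Suc j"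
  using I3_key H_same by metis

lemma I2_g': "\<forall>x\<in>V. cn r x \<noteq> Min (g' x) \<longrightarrow> (\<exists>t. tgtm r x = Some t \<and> t \<in> cn r ` g' x \<and> hdb (cn r x) t < Suc j)"
proof (intro ballI impI)
  fix x assume x: "x \<in> V" and ne: "cn r x \<noteq> Min (g' x)"
  show "\<exists>t. tgtm r x = Some t \<and> t \<in> cn r ` g' x \<and> hdb (cn r x) t < Suc j"
  proof (cases "cn r x = Min (g x)")
    case False
    then obtain t where "tgtm r x = Some t" "t \<in> cn r ` g x" "hdb (cn r x) t < j" using I2 x by blast
    then show ?thesis using g_sub_g'[OF x] by auto
  next
    case True
    have lx: "lf x"
    proof (rule ccontr)
      assume "\<not> lf x"
      then have "Min (g' x) = Min (g x)" using Min_g'[OF x] by (simp add: H_def)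
      then show False using ne True by simp
    qed
    obtain t where t: "tgtm r (Min (g x)) = Some t" "hdb (Min (g x)) t = j" "cn r (snd (ep x)) = t"
      "snd (ep x) \<in> V" using ep_facts[OF x lx] by blast
    have "tgtm r x = tgtm r (Min (g x))"
      using tgtm_cong'[OF x] Min_gV'[OF x] cn_Min'[OF x] True by metis
    moreover have "snd (ep x) \<in> H x" using gself[OF t(4)] lx unfolding H_def by simp
    then have "snd (ep x) \<in> g' x" using H_sub_g' by blast
    then have "t \<in> cn r ` g' x" using t(3) by blast
    moreover have "hdb (cn r x) t < Suc j" using t(2) True by simp
    ultimately show ?thesis using t(1) by auto
  qed
qed

lemma I4_g': "\<forall>x\<in>V. cn r x = Min (g' x) \<longrightarrow> (\<forall>t. tgtm r x = Some t \<longrightarrow> Suc j \<le> hdb (cn r x) t)"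
proof (intro ballI impI allI)
  fix x t assume x: "x \<in> V" and eq: "cn r x = Min (g' x)" and tx: "tgtm r x = Some t"
  have nl: "\<not> lf x"
  proof
    assume lx: "lf x"
    obtain t' where t': "t' < Min (g x)" "cn r (snd (ep x)) = t'" "snd (ep x) \<in> V"
      using ep_facts[OF x lx] by blast
    have "Min (g' x) = Min (g (snd (ep x)))" using Min_g'[OF x] lx by (simp add: H_def)
    also have "\<dots> \<le> t'" using cn_ge'[OF t'(3) gself[OF t'(3)]] t'(2) by simp
    finally have "cn r x < Min (g x)" using eq t'(1) by simp
    moreover have "Min (g x) \<le> cn r x" using cn_ge'[OF x gself[OF x]] .
    ultimately show False by simp
  qed
  then have cx: "cn r x = Min (g x)" using eq Min_g'[OF x] by (simp add: H_def)
  have jle: "j \<le> hdb (cn r x) t" using I4 x cx tx by blast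
  have "hdb (cn r x) t \<noteq> j"
  proof
    assume "hdb (cn r x) t = j"
    moreover have "tgtm r (Min (g x)) = Some t"
      using tgtm_cong'[OF x] Min_gV'[OF x] cn_Min'[OF x] cx tx by metis
    ultimately have "lf x" using lf_iff[OF x] cx by auto
    then show False using nl by simp
  qed
  then show "Suc j \<le> hdb (cn r x) t" using jle by simp
qed

lemma Inv_step: "Inv r (Suc j) g'"
  unfolding Inv_def using part_g' conn_g' coarse_g' I2_g' I3_g' I4_g' by blast

end

lemma Inv0: "Inv r 0 (grp r)"
proof -
  have "\<forall>x\<in>V. \<forall>y\<in>grp r x. cn r x = cn r y"
  proof (intro ballI)
    fix x y assume "x \<in> V" "y \<in> grp r x"
    then have "grp r y = grp r x" using part_same[OF Pp] by blast
    then show "cn r x = cn r y" by (simp add: cn_def)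
  qed
  then show ?thesis unfolding Inv_def using Pp Pc by (simp add: cn_def)
qed

lemma Inv_gsub: "Inv r j (gsub (fx (Suc r)) r (grp r) j)"
  by (induction j) (auto simp: Inv0 Inv_step)

lemma Inv_end: "Inv r (nbits N) (grp (Suc r))"
  using Inv_gsub by (simp add: grp_Suc)

lemma end_target:
  assumes x: "x \<in> V" and t: "tgtm r x = Some t"
  shows "\<exists>y\<in>grp (Suc r) x. cn r y = t"
proof -
  have inv: "Inv r (nbits N) (grp (Suc r))" by (rule Inv_end)
  show ?thesis
  proof (cases "cn r x = Min (grp (Suc r) x)")
    case False
    have "\<forall>x\<in>V. cn r x \<noteq> Min (grp (Suc r) x) \<longrightarrow> (\<exists>t. tgtm r x = Some t \<and> t \<in> cn r ` grp (Suc r) x \<and> hdb (cn r x) t < nbits N)"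
      using inv unfolding Inv_def by blast
    then obtain t' where "tgtm r x = Some t'" "t' \<in> cn r ` grp (Suc r) x" using x False by blast
    then show ?thesis using t by auto
  next
    case True
    then have "nbits N \<le> hdb (cn r x) t" using inv x t unfolding Inv_def by blast
    moreover have "cn r x \<in> V" using cn_V[OF Pp Pc x] .
    moreover obtain x' y where "E x' y" "cn r y = t" using tgtm_SomeD[OF t] by blast
    moreover have "y \<in> V" using \<open>E x' y\<close> EV by blast
    ultimately have "nbits N \<le> hdb (cn r x) (cn r y)" "cn r x < 2 ^ nbits N" "cn r y < 2 ^ nbits N"
      using Vbits cn_V[OF Pp Pc] by auto
    then show ?thesis using hdb_less L1 by (meson leD)
  qed
qed

end

lemma grp_inv: "part V (grp r) \<and> conn V E (grp r)"
proof (induction r)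
  case 0
  show ?case unfolding part_def conn_def by (simp add: grp0)
next
  case (Suc r)
  then show ?case using Inv_end[of r] unfolding Inv_def by blast
qed

end


lemma fiber_count:
  assumes fin: "finite A" and fib: "\<forall>a\<in>A. \<exists>a'\<in>A. a' \<noteq> a \<and> f a' = f a"
  shows "2 * card (f ` A) \<le> card A"
proof -
  define B where "B b = {a\<in>A. f a = b}" for b
  have U: "(\<Union>b\<in>f ` A. B b) = A" by (auto simp: B_def)
  have "card (\<Union>b\<in>f ` A. B b) = (\<Sum>b\<in>f ` A. card (B b))"
    by (rule card_UN_disjoint) (use fin in \<open>auto simp: B_def\<close>)
  moreover have "\<forall>b\<in>f ` A. 2 \<le> card (B b)"
  proof
    fix b assume "b \<in> f ` A"
    then obtain a where a: "a \<in> A" "f a = b" by blast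
    then obtain a' where a': "a' \<in> A" "a' \<noteq> a" "f a' = f a" using fib by blast
    have "{a, a'} \<subseteq> B b" using a a' by (auto simp: B_def)
    moreover have "finite (B b)" using fin by (simp add: B_def)
    ultimately have "card {a, a'} \<le> card (B b)" by (rule card_mono[rotated])
    then show "2 \<le> card (B b)" using a'(2) by simp
  qed
  then have "of_nat (card (f ` A)) * 2 \<le> (\<Sum>b\<in>f ` A. card (B b))" by (intro sum_bounded_below) blast
  ultimately show ?thesis using U by simp
qed

context net
begin

lemma grpP: "part V (grp r)" using grp_inv by blast
lemma grpC: "conn V E (grp r)" using grp_inv by blast
lemma grp_self: "v \<in> V \<Longrightarrow> v \<in> grp r v" using grpP unfolding part_def by blast
lemma grp_sameD: "v \<in> V \<Longrightarrow> y \<in> grp r v \<Longrightarrow> grp r y = grp r v \<and> y \<in> V"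
  using part_same[OF grpP] by blast
lemma grp_coarse: "v \<in> V \<Longrightarrow> grp r v \<subseteq> grp (Suc r) v"
  using Inv_end[OF grpP grpC] unfolding Inv_def by blast
lemma grp_subV: "v \<in> V \<Longrightarrow> grp r v \<subseteq> V"
  using grpP unfolding part_def by blast
lemma grp_coarse2: "v \<in> V \<Longrightarrow> grp r v \<subseteq> grp (r + k) v"
  by (induction k) (auto dest: grp_coarse)

lemmas end_target' = end_target[OF grpP grpC]
lemmas cn_eq_grp' = cn_eq_grp[OF grpP grpC]

lemma cn_ne: "x \<in> V \<Longrightarrow> y \<in> V \<Longrightarrow> grp r y \<noteq> grp r x \<Longrightarrow> cn r y \<noteq> cn r x"
  using cn_eq_grp' by blast

lemma key_claim:
  assumes nv: "\<forall>v\<in>V. grp r v \<noteq> V" and x: "x \<in> V"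
  shows "\<exists>y\<in>grp (Suc (Suc r)) x. grp r y \<noteq> grp r x"
proof -
  have c12: "grp (Suc r) w \<subseteq> grp (Suc (Suc r)) w" if "w \<in> V" for w using grp_coarse that .
  have c01: "grp r w \<subseteq> grp (Suc r) w" if "w \<in> V" for w using grp_coarse that .
  show ?thesis
  proof (cases "\<exists>t. tgtm r x = Some t")
    case True
    then obtain t where t: "tgtm r x = Some t" by blast
    obtain y where y: "y \<in> grp (Suc r) x" "cn r y = t" using end_target'[OF x t] by blast
    have "t < cn r x" using tgtm_SomeD[OF t] by simp
    then have "grp r y \<noteq> grp r x" using y(2) by (auto simp: cn_def)
    then show ?thesis using y c12[OF x] by blast
  next
    case noA: False
    show ?thesis
    proof (cases "\<exists>z\<in>V. tgtm r z = Some (cn r x) \<and> grp r z \<noteq> grp r x")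
      case True
      then obtain z where z: "z \<in> V" "tgtm r z = Some (cn r x)" "grp r z \<noteq> grp r x" by blast
      obtain y where y: "y \<in> grp (Suc r) z" "cn r y = cn r x" using end_target'[OF z(1) z(2)] by blast
      have yV: "y \<in> V" "grp (Suc r) y = grp (Suc r) z" using grp_sameD[OF z(1) y(1)] by auto
      have "grp r y = grp r x" using cn_eq_grp'[OF yV(1) x y(2)] .
      then have "x \<in> grp (Suc r) y" using grp_self[OF x] c01[OF yV(1)] by blast
      then have "grp (Suc r) x = grp (Suc r) z" using grp_sameD[OF yV(1)] yV(2) by metis
      then have "z \<in> grp (Suc (Suc r)) x" using grp_self[OF z(1)] c12[OF x] by blast
      then show ?thesis using z(3) by blast
    next
      case noB: False
      have "grp r x \<noteq> V" using nv x by blast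
      then obtain b0 where b0: "b0 \<in> V" "b0 \<notin> grp r x" using grp_subV[OF x] by blast
      obtain a b where ab: "a \<in> grp r x" "b \<notin> grp r x" "E a b"
        using cross[OF Vconn[OF x b0(1)] grp_self[OF x] b0(2)] by blast
      have aV: "a \<in> V" "grp r a = grp r x" using grp_sameD[OF x ab(1)] by auto
      have bV: "b \<in> V" using ab(3) EV by blast
      have gb: "grp r b \<noteq> grp r x" using ab(2) grp_self[OF bV] by blast
      have cnb: "cn r b \<noteq> cn r x" using cn_ne[OF x bV gb] .
      have "\<not> cn r b < cn r x"
      proof
        assume "cn r b < cn r x"
        then show False using tgtm_exists[OF ab(1) ab(3)] noA by blast
      qed
      then have lt: "cn r x < cn r b" using cnb by simp
      have cna: "cn r a = cn r x" using aV(2) by (simp add: cn_def)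
      have "cn r a < cn r b" using lt cna by simp
      then obtain t where t: "tgtm r b = Some t" "t \<le> cn r a"
        using tgtm_exists[OF grp_self[OF bV] Esym[OF ab(3)]] by blast
      then have t: "tgtm r b = Some t" "t \<le> cn r x" using cna by auto
      have "t \<noteq> cn r x" using noB t(1) bV gb by blast
      then have tl: "t < cn r x" using t(2) by simp
      obtain e where e: "e \<in> grp (Suc r) b" "cn r e = t" using end_target'[OF bV t(1)] by blast
      have eV: "e \<in> V" "grp (Suc r) e = grp (Suc r) b" using grp_sameD[OF bV e(1)] by auto
      have "cn r e \<in> grp (Suc r) b" using cn_in[OF grpP grpC eV(1)] c01[OF eV(1)] eV(2) by blast
      then have mb: "Min (grp (Suc r) b) < cn r x"
        using part_Min_le[OF grpP bV] e(2) tl by fastforce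
      show ?thesis
      proof (cases "grp (Suc r) x = grp r x")
        case False
        then obtain y where y: "y \<in> grp (Suc r) x" "y \<notin> grp r x" using c01[OF x] by blast
        have "y \<in> V" using grp_sameD[OF x y(1)] by blast
        then have "grp r y \<noteq> grp r x" using y(2) grp_self by blast
        then show ?thesis using y(1) c12[OF x] by blast
      next
        case True
        have cx1: "cn (Suc r) x = cn r x" using True by (simp add: cn_def)
        have "cn (Suc r) b < cn (Suc r) x" using mb cx1 by (simp add: cn_def)
        moreover have "a \<in> grp (Suc r) x" using ab(1) True by simp
        ultimately obtain t1 where t1: "tgtm (Suc r) x = Some t1"
          using tgtm_exists[of a "Suc r" x b] ab(3) by blast
        have t1l: "t1 < cn (Suc r) x" using tgtm_SomeD[OF t1] by simp
        obtain y where y: "y \<in> grp (Suc (Suc r)) x" "cn (Suc r) y = t1" using end_target'[OF x t1] by blast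
        have yV: "y \<in> V" using grp_sameD[OF x y(1)] by blast
        have "grp (Suc r) y \<noteq> grp (Suc r) x" using y(2) t1l by (auto simp: cn_def)
        then have "y \<notin> grp (Suc r) x" using grp_sameD[OF x] by blast
        then have "y \<notin> grp r x" using True by simp
        then have "grp r y \<noteq> grp r x" using grp_self[OF yV] by blast
        then show ?thesis using y(1) by blast
      qed
    qed
  qed
qed

definition cnt :: "nat \<Rightarrow> nat" where "cnt r = card (grp r ` V)"

lemma halving:
  assumes nv: "\<forall>v\<in>V. grp r v \<noteq> V"
  shows "2 * cnt (Suc (Suc r)) \<le> cnt r"
proof -
  define f where "f X = grp (Suc (Suc r)) (Min X)" for X
  have fX: "f (grp r x) = grp (Suc (Suc r)) x" if x: "x \<in> V" for x
  proof -
    have "Min (grp r x) \<in> grp r x" using part_Min_in[OF grpP x] .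
    then have "Min (grp r x) \<in> grp (Suc (Suc r)) x" using grp_coarse2[OF x, of r 2] by auto
    then show ?thesis unfolding f_def using grp_sameD[OF x] by blast
  qed
  have img: "f ` (grp r ` V) = grp (Suc (Suc r)) ` V" using fX by (force simp: image_image)
  have "2 * card (f ` (grp r ` V)) \<le> card (grp r ` V)"
  proof (rule fiber_count)
    show "finite (grp r ` V)" using finV by simp
    show "\<forall>a\<in>grp r ` V. \<exists>a'\<in>grp r ` V. a' \<noteq> a \<and> f a' = f a"
    proof
      fix a assume "a \<in> grp r ` V"
      then obtain x where x: "x \<in> V" "a = grp r x" by blast
      obtain y where y: "y \<in> grp (Suc (Suc r)) x" "grp r y \<noteq> grp r x" using key_claim[OF nv x(1)] by blast
      have yV: "y \<in> V" "grp (Suc (Suc r)) y = grp (Suc (Suc r)) x" using grp_sameD[OF x(1) y(1)] by auto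
      show "\<exists>a'\<in>grp r ` V. a' \<noteq> a \<and> f a' = f a"
        using yV y(2) x fX by (intro bexI[of _ "grp r y"]) auto
    qed
  qed
  then show ?thesis using img by (simp add: cnt_def)
qed

lemma allV_stay: "\<exists>v\<in>V. grp r v = V \<Longrightarrow> \<exists>v\<in>V. grp (r + k) v = V"
  using grp_coarse2 grp_subV by (metis subset_antisym)

lemma cnt0: "cnt 0 = card V"
proof -
  have "grp 0 ` V = (\<lambda>x. {x}) ` V" by (simp add: grp0)
  moreover have "card ((\<lambda>x. {x}) ` V) = card V" by (rule card_image) (simp add: inj_on_def)
  ultimately show ?thesis by (simp add: cnt_def)
qed

lemma cnt_pos: "1 \<le> cnt r"
  using finV Vne by (simp add: cnt_def card_gt_0_iff Suc_le_eq)

lemma rounds_bound: "(\<exists>v\<in>V. grp (2 * k) v = V) \<or> cnt (2 * k) * 2 ^ k \<le> card V"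
proof (induction k)
  case 0 then show ?case by (simp add: cnt0)
next
  case (Suc k)
  show ?case
  proof (cases "\<exists>v\<in>V. grp (2 * k) v = V")
    case True
    then have "\<exists>v\<in>V. grp (2 * k + 2) v = V" by (rule allV_stay)
    then show ?thesis by simp
  next
    case False
    then have nv: "\<forall>v\<in>V. grp (2 * k) v \<noteq> V" by blast
    have "2 * cnt (Suc (Suc (2 * k))) \<le> cnt (2 * k)" by (rule halving[OF nv])
    then have "cnt (2 * Suc k) * 2 * 2 ^ k \<le> cnt (2 * k) * 2 ^ k" by (simp add: mult_le_mono1)
    then have "cnt (2 * Suc k) * 2 ^ Suc k \<le> cnt (2 * k) * 2 ^ k" by (simp add: mult.assoc)
    then show ?thesis using Suc False by linarith
  qed
qed

lemma final_grp: "v \<in> V \<Longrightarrow> grp (2 * nbits (card V)) v = V"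
proof -
  assume v: "v \<in> V"
  define k where "k = nbits (card V)"
  have "\<exists>w\<in>V. grp (2 * k) w = V"
  proof (rule ccontr)
    assume "\<not> ?thesis"
    then have "cnt (2 * k) * 2 ^ k \<le> card V" using rounds_bound by blast
    moreover have "card V < 2 ^ k" using nbits_gt by (simp add: k_def)
    moreover have "1 \<le> cnt (2 * k)" by (rule cnt_pos)
    ultimately show False
      by (metis le_trans linorder_not_le mult_le_mono1 nat_mult_1)
  qed
  then obtain w where w: "w \<in> V" "grp (2 * k) w = V" by blast
  then have "grp (2 * k) v = grp (2 * k) w" using grp_sameD[OF w(1), of v] v by auto
  then show ?thesis using w by (simp add: k_def)
qed

end


lemma act_payload: "is_transmit (act q) \<Longrightarrow> payload (act q) = q"
  by (auto simp: act_def Let_def split: mode.splits if_splits option.splits bool.splits)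

lemma newinfo_fin: "finite (snd (newinfo q M))"
proof (cases M)
  case None then show ?thesis by (simp add: newinfo_def Let_def)
next
  case (Some M')
  then show ?thesis by (simp add: newinfo_def Let_def split: mode.splits)
qed

definition msgmerge :: "'m st \<Rightarrow> 'm st set \<Rightarrow> 'm option" where
  "msgmerge q P = (if fst q \<noteq> None then fst q else if (\<exists>q'\<in>P. fst q' \<noteq> None) then fst (SOME q'. q' \<in> P \<and> fst q' \<noteq> None) else None)"

lemma newinfo_msg:
  assumes "\<forall>r b p. mode_of (nn (dec (snd q))) (NNv (dec (snd q))) (clk (dec (snd q))) \<noteq> MEx r b p"
  shows "fst (newinfo q (Some M)) = msgmerge q {q' \<in> set_mset M. accepts (dec (snd q)) q'}"
  using assms by (cases "mode_of (nn (dec (snd q))) (NNv (dec (snd q))) (clk (dec (snd q)))")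
    (simp_all add: newinfo_def msgmerge_def Let_def)

lemma msgmerge_val:
  assumes "fst q = None \<or> fst q = Some m" "\<forall>q'\<in>P. fst q' = None \<or> fst q' = Some m"
  shows "msgmerge q P = (if fst q = Some m \<or> (\<exists>q'\<in>P. fst q' = Some m) then Some m else None)"
proof -
  have "(\<exists>q'\<in>P. fst q' \<noteq> None) \<Longrightarrow> fst (SOME q'. q' \<in> P \<and> fst q' \<noteq> None) = Some m"
    using assms(2) by (metis (mono_tags, lifting) someI_ex)
  then show ?thesis using assms unfolding msgmerge_def by auto
qed

context net
begin

context fixes s :: nat and m :: "'m"
begin

definition cfg :: "nat \<Rightarrow> nat \<Rightarrow> 'm st" where "cfg t v = exec ALG N V E (\<lambda>x. x) s m t v"

abbreviation au where "au t v \<equiv> dec (snd (cfg t v))"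
abbreviation Ac where "Ac t v \<equiv> set (acc (au t v))"
abbreviation Kn where "Kn t v \<equiv> set (kn (au t v))"

definition TX :: "nat \<Rightarrow> nat \<Rightarrow> nat set" where
  "TX t v = {u \<in> V. E v u \<and> is_transmit (act (cfg t u))}"

lemma TX_fin: "finite (TX t v)" using finV by (simp add: TX_def)

lemma cfg0: "cfg 0 v = init (card V) N v (if v = s then Some m else None)"
  by (simp add: cfg_def ALG_def)

lemma cfgSuc: "cfg (Suc t) v = upd (cfg t v) (if act (cfg t v) = Listen
   then Some (image_mset (cfg t) (mset_set (TX t v))) else None)"
proof -
  have fin: "finite {u \<in> V. E v u \<and> is_transmit (act (cfg t u))}" using finV by simp
  have "image_mset (\<lambda>u. payload (act (cfg t u))) (mset_set (TX t v)) = image_mset (cfg t) (mset_set (TX t v))"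
    by (rule image_mset_cong) (use fin in \<open>auto simp: TX_def act_payload\<close>)
  then show ?thesis by (simp add: cfg_def ALG_def Let_def TX_def)
qed

lemma au_basic: "clk (au t v) = t \<and> me (au t v) = v \<and> nn (au t v) = card V \<and> NNv (au t v) = N"
proof (induction t arbitrary: v)
  case 0 then show ?case by (simp add: cfg0 init_def)
next
  case (Suc t) then show ?case by (simp add: cfgSuc upd_def Let_def)
qed

lemma au_clk[simp]: "clk (au t v) = t" using au_basic by blast
lemma au_me[simp]: "me (au t v) = v" using au_basic by blast
lemma au_nn[simp]: "nn (au t v) = card V" using au_basic by blast
lemma au_NN[simp]: "NNv (au t v) = N" using au_basic by blast

definition Mo :: "nat \<Rightarrow> nat \<Rightarrow> 'm st multiset option" where
  "Mo t v = (if act (cfg t v) = Listen then Some (image_mset (cfg t) (mset_set (TX t v))) else None)"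

lemma Ac_Suc0: "Ac (Suc t) v = Ac t v \<union> snd (newinfo (cfg t v) (Mo t v))"
proof -
  have "set (SOME xs. set xs = snd (newinfo (cfg t v) (Mo t v))) = snd (newinfo (cfg t v) (Mo t v))"
    using finite_list[OF newinfo_fin] by (rule someI_ex)
  then show ?thesis by (simp add: cfgSuc upd_def Let_def Mo_def[symmetric])
qed

lemma Kn_Suc: "Kn (Suc t) v = (if commit (card V) N t then Ac (Suc t) v else Kn t v)"
  by (simp add: cfgSuc upd_def Let_def Mo_def[symmetric])

lemma msg_Suc: "fst (cfg (Suc t) v) = fst (newinfo (cfg t v) (Mo t v))"
  by (simp add: cfgSuc upd_def Let_def Mo_def[symmetric])

lemma set_Mo: "Mo t v = Some M \<Longrightarrow> set_mset M = cfg t ` TX t v"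
  by (auto simp: Mo_def TX_fin split: if_splits)

definition ACCs :: "nat \<Rightarrow> nat \<Rightarrow> nat set" where
  "ACCs t v = {u \<in> TX t v. accepts (au t v) (cfg t u)}"

lemma Ac_Suc: "Ac (Suc t) v = Ac t v \<union> (if act (cfg t v) = Listen then
   (case mode_of (card V) N t of
      MEx r b p \<Rightarrow> (\<lambda>u. Nb r v (gname (Kn t v)) u (gname (Kn t u))) ` TX t v
    | _ \<Rightarrow> (\<Union>u\<in>ACCs t v. Ac t u)) else {})"
proof (cases "act (cfg t v) = Listen")
  case False
  then show ?thesis by (simp add: Ac_Suc0 Mo_def newinfo_def Let_def)
next
  case True
  define M where "M = image_mset (cfg t) (mset_set (TX t v))"
  have Mo: "Mo t v = Some M" using True by (simp add: Mo_def M_def)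
  have sM: "set_mset M = cfg t ` TX t v" using set_Mo[OF Mo] .
  show ?thesis
  proof (cases "mode_of (card V) N t")
    case (MEx r b p)
    then show ?thesis using True by (simp add: Ac_Suc0 Mo newinfo_def Let_def sM image_image)
  next
    case (MSp r sg)
    then show ?thesis using True by (auto simp add: Ac_Suc0 Mo newinfo_def Let_def sM ACCs_def)
  next
    case (MSw r sg w)
    then show ?thesis using True by (auto simp add: Ac_Suc0 Mo newinfo_def Let_def sM ACCs_def)
  qed
qed

lemma Ac_mono: "Ac t v \<subseteq> Ac (Suc t) v" using Ac_Suc by blast

lemma Ac_mono': "t \<le> t' \<Longrightarrow> Ac t v \<subseteq> Ac t' v"
  by (induction rule: dec_induct) (use Ac_mono in blast)+

lemma msg_inv: "fst (cfg t v) = (if Me s \<in> Ac t v then Some m else None)"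
proof (induction t arbitrary: v)
  case 0 then show ?case by (simp add: cfg0 init_def)
next
  case (Suc t)
  show ?case
  proof (cases "Mo t v")
    case None
    then have "act (cfg t v) \<noteq> Listen" by (simp add: Mo_def split: if_splits)
    then show ?thesis using None Suc[of v] by (simp add: msg_Suc newinfo_def Ac_Suc)
  next
    case (Some M)
    have L: "act (cfg t v) = Listen" using Some by (simp add: Mo_def split: if_splits)
    have sM: "set_mset M = cfg t ` TX t v" using set_Mo[OF Some] .
    show ?thesis
    proof (cases "mode_of (card V) N t")
      case (MEx r b p)
      then show ?thesis using Some Suc[of v] L by (auto simp add: msg_Suc newinfo_def Ac_Suc)
    next
      case (MSp r sg)
      define P where "P = {q \<in> set_mset M. accepts (au t v) q}"
      have P: "P = cfg t ` ACCs t v" unfolding P_def ACCs_def sM by auto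
      have "fst (cfg (Suc t) v) = msgmerge (cfg t v) P"
        unfolding msg_Suc Some P_def using MSp by (intro newinfo_msg) simp
      also have "\<dots> = (if fst (cfg t v) = Some m \<or> (\<exists>q'\<in>P. fst q' = Some m) then Some m else None)"
        by (rule msgmerge_val) (use Suc P in auto)
      finally show ?thesis using Suc P L MSp by (auto simp: Ac_Suc)
    next
      case (MSw r sg w)
      define P where "P = {q \<in> set_mset M. accepts (au t v) q}"
      have P: "P = cfg t ` ACCs t v" unfolding P_def ACCs_def sM by auto
      have "fst (cfg (Suc t) v) = msgmerge (cfg t v) P"
        unfolding msg_Suc Some P_def using MSw by (intro newinfo_msg) simp
      also have "\<dots> = (if fst (cfg t v) = Some m \<or> (\<exists>q'\<in>P. fst q' = Some m) then Some m else None)"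
        by (rule msgmerge_val) (use Suc P in auto)
      finally show ?thesis using Suc P L MSw by (auto simp: Ac_Suc)
    qed
  qed
qed

end

end


lemma RL_eq: "RLn n N = 2 * nbits N + (2 * nbits N + 1) * SLn n" by (simp add: RLn_def)

lemma divmod_off: "a < (R::nat) \<Longrightarrow> (r * R + a) div R = r \<and> (r * R + a) mod R = a"
  by simp

lemma mode_EX: "ofs < 2 * nbits N \<Longrightarrow> mode_of n N (r * RLn n N + ofs) = MEx r (ofs div 2) (ofs mod 2)"
proof -
  assume a: "ofs < 2 * nbits N"
  then have "ofs < RLn n N" by (simp add: RLn_def)
  then show ?thesis using a by (simp add: mode_of_def Let_def)
qed

lemma mode_SP: assumes "sg < 2 * nbits N + 1"
  shows "mode_of n N (r * RLn n N + 2 * nbits N + sg * SLn n) = MSp r sg"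
proof -
  have "sg * SLn n < (2 * nbits N + 1) * SLn n" using assms by (intro mult_less_mono1) (simp_all add: SLn_def)
  then have lt: "2 * nbits N + sg * SLn n < RLn n N" by (simp add: RLn_def)
  have eq: "r * RLn n N + 2 * nbits N + sg * SLn n = r * RLn n N + (2 * nbits N + sg * SLn n)" by simp
  have "(r * RLn n N + 2 * nbits N + sg * SLn n) div RLn n N = r"
       "(r * RLn n N + 2 * nbits N + sg * SLn n) mod RLn n N = 2 * nbits N + sg * SLn n"
    unfolding eq using divmod_off[OF lt] by blast+
  moreover have "SLn n > 0" by (simp add: SLn_def)
  ultimately show ?thesis by (simp add: mode_of_def Let_def)
qed

lemma mode_SW: assumes "sg < 2 * nbits N + 1" "w < 2 * n"
  shows "mode_of n N (r * RLn n N + 2 * nbits N + sg * SLn n + Suc w) = MSw r sg w"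
proof -
  have "sg * SLn n + Suc w < (2 * nbits N + 1) * SLn n"
  proof -
    have "sg * SLn n + Suc w < sg * SLn n + SLn n" using assms by (simp add: SLn_def)
    also have "\<dots> = Suc sg * SLn n" by simp
    also have "\<dots> \<le> (2 * nbits N + 1) * SLn n" using assms(1) by (intro mult_le_mono1) simp
    finally show ?thesis .
  qed
  then have lt: "2 * nbits N + sg * SLn n + Suc w < RLn n N" by (simp add: RLn_def)
  have eq: "r * RLn n N + 2 * nbits N + sg * SLn n + Suc w = r * RLn n N + (2 * nbits N + sg * SLn n + Suc w)" by simp
  have dm: "(r * RLn n N + 2 * nbits N + sg * SLn n + Suc w) div RLn n N = r"
       "(r * RLn n N + 2 * nbits N + sg * SLn n + Suc w) mod RLn n N = 2 * nbits N + sg * SLn n + Suc w"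
    unfolding eq using divmod_off[OF lt] by blast+
  moreover have "Suc w < SLn n" using assms(2) by (simp add: SLn_def)
  then have "(sg * SLn n + Suc w) div SLn n = sg" "(sg * SLn n + Suc w) mod SLn n = Suc w"
    using divmod_off by blast+
  moreover have "\<not> 2 * nbits N + sg * SLn n + Suc w < 2 * nbits N" by simp
  moreover have "2 * nbits N + sg * SLn n + Suc w - 2 * nbits N = sg * SLn n + Suc w" by simp
  ultimately show ?thesis unfolding mode_of_def Let_def dm by simp
qed

lemma commit_MEx: "mode_of n N t = MEx r b p \<Longrightarrow> \<not> commit n N t" by (simp add: commit_def)
lemma commit_MSp: "mode_of n N t = MSp r sg \<Longrightarrow> \<not> commit n N t" by (simp add: commit_def)
lemma commit_MSw: "mode_of n N t = MSw r sg w \<Longrightarrow> commit n N t \<longleftrightarrow> even sg \<and> w + 1 = 2 * n"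
  by (simp add: commit_def)

lemma ballK_mono: "k \<le> k' \<Longrightarrow> ballK K k \<subseteq> ballK K k'"
  by (induction rule: dec_induct) auto

lemma reach_ball: "(adjK K)\<^sup>*\<^sup>* (gname K) x \<Longrightarrow> \<exists>k. x \<in> ballK K k"
proof (induction rule: rtranclp_induct)
  case base then show ?case using ballK.simps(1) by blast
next
  case (step y z)
  then obtain k where "y \<in> ballK K k" by blast
  then have "z \<in> ballK K (Suc k)" using step by auto
  then show ?case by blast
qed

lemma lvl_in: "\<exists>k. x \<in> ballK K k \<Longrightarrow> x \<in> ballK K (lvl K x)"
  unfolding lvl_def by (rule LeastI_ex)

lemma lvl_0: "\<exists>k. x \<in> ballK K k \<Longrightarrow> lvl K x = 0 \<Longrightarrow> x = gname K"
  using lvl_in by fastforce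

lemma lvl_root: "lvl K (gname K) = 0"
  unfolding lvl_def by (rule Least_eq_0) simp

lemma lvl_Suc:
  assumes ex: "\<exists>k. x \<in> ballK K k" and l: "lvl K x = Suc k"
  shows "\<exists>p. adjK K p x \<and> lvl K p = k \<and> (\<exists>k. p \<in> ballK K k)"
proof -
  have x1: "x \<in> ballK K (Suc k)" using lvl_in[OF ex] l by simp
  have x2: "x \<notin> ballK K k"
  proof
    assume "x \<in> ballK K k"
    then have "lvl K x \<le> k" unfolding lvl_def by (rule Least_le)
    then show False using l by simp
  qed
  obtain p where p: "p \<in> ballK K k" "adjK K p x" using x1 x2 by auto
  have pl: "lvl K p \<le> k" using p(1) unfolding lvl_def by (rule Least_le)
  have "\<not> lvl K p < k"
  proof
    assume "lvl K p < k"
    have "p \<in> ballK K (lvl K p)" using lvl_in p(1) by blast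
    then have "x \<in> ballK K (Suc (lvl K p))" using p(2) by auto
    moreover have "ballK K (Suc (lvl K p)) \<subseteq> ballK K k" using \<open>lvl K p < k\<close> by (intro ballK_mono) simp
    ultimately show False using x2 by blast
  qed
  then show ?thesis using pl p by (intro exI[of _ p]) auto
qed

lemma adjK_mem: "adjK K a b \<Longrightarrow> a \<in> mem K \<and> b \<in> mem K" by (simp add: adjK_def)

lemma lvl_bound:
  assumes fin: "finite (mem K)" and conn: "\<forall>x\<in>mem K. \<exists>k. x \<in> ballK K k"
    and rt: "gname K \<in> mem K" and x: "x \<in> mem K"
  shows "lvl K x < card (mem K)"
proof -
  have ex: "\<forall>i. i \<le> lvl K x \<longrightarrow> (\<exists>y\<in>mem K. lvl K y = i)"
  proof (intro allI impI)
    fix i assume "i \<le> lvl K x"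
    then obtain d where d: "lvl K x = i + d" using le_Suc_ex by blast
    have "\<forall>y\<in>mem K. lvl K y = i + d \<longrightarrow> (\<exists>z\<in>mem K. lvl K z = i)"
    proof (induction d)
      case 0 then show ?case by auto
    next
      case (Suc d)
      show ?case
      proof (intro ballI impI)
        fix y assume y: "y \<in> mem K" "lvl K y = i + Suc d"
        then obtain p where p: "adjK K p y" "lvl K p = i + d"
          using lvl_Suc[OF conn[rule_format, OF y(1)]] by auto
        then show "\<exists>z\<in>mem K. lvl K z = i" using Suc adjK_mem by blast
      qed
    qed
    then show "\<exists>y\<in>mem K. lvl K y = i" using x d by blast
  qed
  have "{0..lvl K x} \<subseteq> lvl K ` mem K" using ex by auto
  then have "card {0..lvl K x} \<le> card (lvl K ` mem K)" using fin by (intro card_mono) auto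
  also have "\<dots> \<le> card (mem K)" using fin by (rule card_image_le)
  finally show ?thesis by simp
qed


context net
begin

context fixes s :: nat and m :: "'m"
begin

abbreviation "cf \<equiv> cfg s m"
abbreviation "Ac2 t v \<equiv> set (acc (dec (snd (cfg s m t v))))"
abbreviation "Kn2 t v \<equiv> set (kn (dec (snd (cfg s m t v))))"
abbreviation "ACC2 t v \<equiv> net.ACCs V E N s m t v"
abbreviation "TX2 t v \<equiv> net.TX V E N s m t v"

lemma recv:
  assumes "act (cf t v) = Listen" "\<forall>r b p. mode_of (card V) N t \<noteq> MEx r b p" "u \<in> ACC2 t v"
  shows "Ac2 t u \<subseteq> Ac2 (Suc t) v"
  using assms by (cases "mode_of (card V) N t") (auto simp: Ac_Suc[of s m t v])

lemma Ac_ub: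
  assumes "\<forall>r b p. mode_of (card V) N t \<noteq> MEx r b p"
  shows "Ac2 (Suc t) v \<subseteq> Ac2 t v \<union> (\<Union>u\<in>ACC2 t v. Ac2 t u)"
  using assms by (cases "mode_of (card V) N t") (auto simp: Ac_Suc[of s m t v] split: if_splits)

lemma act_MSw:
  assumes "mode_of (card V) N t = MSw r sg w"
  shows "act (cf t v) = (case sweep_act (card V) w (lvl (Kn2 t v) v) of
            Some True \<Rightarrow> Transmit (cf t v) | Some False \<Rightarrow> Listen | None \<Rightarrow> Idle)"
  using assms by (simp add: act_def Let_def)

lemma ACC_MSw:
  assumes "mode_of (card V) N t = MSw r sg w"
  shows "u \<in> ACC2 t v \<longleftrightarrow> u \<in> TX2 t v \<and> gname (Kn2 t u) = gname (Kn2 t v)"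
  using assms by (simp add: ACCs_def accepts_def Let_def)

lemma TX_iff: "u \<in> TX2 t v \<longleftrightarrow> u \<in> V \<and> E v u \<and> is_transmit (act (cf t u))"
  by (simp add: TX_def)

section \<open>Sweep\<close>

lemma sweep:
  fixes ts r sg and KG :: "nat \<Rightarrow> fact set" and g :: "nat \<Rightarrow> nat set"
  assumes H1: "\<forall>w<2 * card V. mode_of (card V) N (ts + w) = MSw r sg w"
    and H2: "\<forall>w<2 * card V. \<forall>v\<in>V. Kn2 (ts + w) v = KG v"
    and H3: "part V g"
    and H4: "\<forall>v\<in>V. mem (KG v) = g v \<and> gname (KG v) = Min (g v)"
    and H5: "\<forall>v\<in>V. \<forall>y\<in>g v. KG y = KG v"
    and H6: "\<forall>v\<in>V. \<forall>x\<in>g v. (adjK (KG v))\<^sup>*\<^sup>* (Min (g v)) x"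
    and H7: "\<forall>v a b. v \<in> V \<longrightarrow> adjK (KG v) a b \<longrightarrow> E a b"
  shows "\<forall>v\<in>V. Ac2 (ts + 2 * card V) v = (\<Union>x\<in>g v. Ac2 ts x)"
proof -
  define n where "n = card V"
  define lv where "lv v = lvl (KG v) v" for v
  define U where "U v = (\<Union>x\<in>g v. Ac2 ts x)" for v
  have self: "v \<in> g v" if "v \<in> V" for v using H3 that unfolding part_def by blast
  have same: "g y = g v \<and> y \<in> V" if "v \<in> V" "y \<in> g v" for v y using part_same[OF H3 that] .
  have ball: "\<exists>k. x \<in> ballK (KG v) k" if "v \<in> V" "x \<in> g v" for v x
    using reach_ball[of "KG v" x] H6 H4 that by simp
  have lv_lt: "lv v < n" if v: "v \<in> V" for v
  proof -
    have "lvl (KG v) v < card (mem (KG v))"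
    proof (rule lvl_bound)
      show "finite (mem (KG v))" using H4 part_fin[OF H3 v] v by simp
      show "\<forall>x\<in>mem (KG v). \<exists>k. x \<in> ballK (KG v) k" using ball v H4 by simp
      show "gname (KG v) \<in> mem (KG v)" using H4 part_Min_in[OF H3 v] v by simp
      show "v \<in> mem (KG v)" using H4 self v by simp
    qed
    moreover have "g v \<subseteq> V" using H3 v unfolding part_def by blast
    then have "card (g v) \<le> n" unfolding n_def using finV by (rule card_mono[rotated])
    then have "card (mem (KG v)) \<le> n" using H4 v by simp
    ultimately show ?thesis by (simp add: lv_def)
  qed
  have lv0: "v = Min (g v)" if "v \<in> V" "lv v = 0" for v
    using lvl_0[OF ball[OF that(1) self[OF that(1)]]] that H4 by (simp add: lv_def)
  have lvroot: "lv (Min (g v)) = 0" if v: "v \<in> V" for v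
  proof -
    have "Min (g v) \<in> g v" using part_Min_in[OF H3 v] .
    then have "KG (Min (g v)) = KG v" using H5 v by blast
    then show ?thesis using lvl_root[of "KG v"] H4 v by (simp add: lv_def)
  qed
  have par: "\<exists>p\<in>g v. E p v \<and> lv p = k" if v: "v \<in> V" and l: "lv v = Suc k" for v k
  proof -
    obtain p where p: "adjK (KG v) p v" "lvl (KG v) p = k"
      using lvl_Suc[OF ball[OF v self[OF v]]] l by (auto simp: lv_def)
    have "p \<in> g v" using adjK_mem[OF p(1)] H4 v by simp
    moreover then have "KG p = KG v" using H5 v by blast
    moreover have "E p v" using H7 v p(1) by blast
    ultimately show ?thesis using p(2) by (intro bexI[of _ p]) (auto simp: lv_def)
  qed
  have act_at: "act (cf (ts + w) v) = (case sweep_act n w (lv v) of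
            Some True \<Rightarrow> Transmit (cf (ts + w) v) | Some False \<Rightarrow> Listen | None \<Rightarrow> Idle)"
    if "w < 2 * n" "v \<in> V" for w v
    using act_MSw[OF H1[rule_format, of w]] H2 that by (simp add: lv_def n_def)
  have acc_at: "u \<in> ACC2 (ts + w) v \<longleftrightarrow> u \<in> V \<and> E v u \<and> is_transmit (act (cf (ts + w) u)) \<and> g u = g v"
    if "w < 2 * n" "v \<in> V" for w v u
  proof -
    have "u \<in> V \<Longrightarrow> gname (KG u) = gname (KG v) \<longleftrightarrow> g u = g v"
      using H4 that part_name_inj[OF H3, of u v] by auto
    then show ?thesis using ACC_MSw[OF H1[rule_format, of w]] H2 that TX_iff by (auto simp: n_def)
  qed
  have notEX: "\<forall>r b p. mode_of (card V) N (ts + w) \<noteq> MEx r b p" if "w < 2 * n" for w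
    using H1 that by (simp add: n_def)
  have xfer: "Ac2 (ts + w) u \<subseteq> Ac2 (ts + Suc w) v"
    if w: "w < 2 * n" and v: "v \<in> V" and u: "u \<in> V" and e: "E v u" and gu: "g u = g v"
      and tu: "sweep_act n w (lv u) = Some True" and lvv: "sweep_act n w (lv v) = Some False" for w v u
  proof -
    have "act (cf (ts + w) v) = Listen" using act_at[OF w v] lvv by simp
    moreover have "u \<in> ACC2 (ts + w) v" using acc_at[OF w v] act_at[OF w u] tu u e gu by simp
    ultimately show ?thesis using recv[OF _ notEX[OF w]] by simp
  qed
  have UB: "\<forall>v\<in>V. Ac2 (ts + w) v \<subseteq> U v" if "w \<le> 2 * n" for w
    using that
  proof (induction w)
    case 0 then show ?case using self unfolding U_def by auto
  next
    case (Suc w)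
    show ?case
    proof
      fix v assume v: "v \<in> V"
      have wl: "w < 2 * n" using Suc by simp
      have "Ac2 (Suc (ts + w)) v \<subseteq> Ac2 (ts + w) v \<union> (\<Union>u\<in>ACC2 (ts + w) v. Ac2 (ts + w) u)"
        by (rule Ac_ub[OF notEX[OF wl]])
      also have "\<dots> \<subseteq> U v"
      proof -
        have "Ac2 (ts + w) u \<subseteq> U v" if "u \<in> ACC2 (ts + w) v" for u
        proof -
          have u: "u \<in> V" "g u = g v" using acc_at[OF wl v] that by auto
          have "Ac2 (ts + w) u \<subseteq> U u" using Suc.IH wl u(1) by simp
          moreover have "U u = U v" using u(2) by (simp add: U_def)
          ultimately show ?thesis by simp
        qed
        then show ?thesis using Suc.IH wl v by auto
      qed
      finally show "Ac2 (ts + Suc w) v \<subseteq> U v" by simp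
    qed
  qed
  have UP: "\<forall>x\<in>V. \<forall>k. lv x = k + i \<longrightarrow> (\<exists>y\<in>g x. lv y = k \<and> Ac2 ts x \<subseteq> Ac2 (ts + (n - 1 - k)) y)" for i
  proof (induction i)
    case 0
    show ?case using self Ac_mono' by (metis add_0_right le_add1)
  next
    case (Suc i)
    show ?case
    proof (intro ballI allI impI)
      fix x k assume x: "x \<in> V" and l: "lv x = k + Suc i"
      obtain y where y: "y \<in> g x" "lv y = Suc k" "Ac2 ts x \<subseteq> Ac2 (ts + (n - 1 - Suc k)) y"
        using Suc.IH x l by (metis add_Suc_shift)
      have yV: "y \<in> V" "g y = g x" using same[OF x y(1)] by auto
      obtain p where p: "p \<in> g y" "E p y" "lv p = k" using par[OF yV(1) y(2)] by blast
      have pV: "p \<in> V" "g p = g y" using same[OF yV(1) p(1)] by auto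
      have kn: "Suc k < n" using lv_lt[OF yV(1)] y(2) by simp
      have "\<exists>d. n = k + 2 + d" using kn by presburger
      then obtain d where nd: "n = k + 2 + d" by blast
      have w: "d < 2 * n" using nd by simp
      have "sweep_act n d (lv y) = Some True" "sweep_act n d (lv p) = Some False"
        using nd y(2) p(3) by (auto simp: sweep_act_def)
      then have A: "Ac2 (ts + d) y \<subseteq> Ac2 (ts + Suc d) p"
        using xfer[OF w pV(1) yV(1) p(2) pV(2)[symmetric]] by blast
      have "n - 1 - Suc k = d" "n - 1 - k = Suc d" using nd by simp_all
      then have "Ac2 ts x \<subseteq> Ac2 (ts + (n - 1 - k)) p" using y(3) A by simp
      then show "\<exists>y\<in>g x. lv y = k \<and> Ac2 ts x \<subseteq> Ac2 (ts + (n - 1 - k)) y"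
        using p(1) p(3) yV(2) by blast
    qed
  qed
  have root: "U v \<subseteq> Ac2 (ts + (n - 1)) (Min (g v))" if v: "v \<in> V" for v
  proof -
    have "Ac2 ts x \<subseteq> Ac2 (ts + (n - 1)) (Min (g v))" if x: "x \<in> g v" for x
    proof -
      have xV: "x \<in> V" "g x = g v" using same[OF v x] by auto
      obtain y where y: "y \<in> g x" "lv y = 0" "Ac2 ts x \<subseteq> Ac2 (ts + (n - 1 - 0)) y"
        using UP[of "lv x"] xV(1) by (metis add_0)
      have "y \<in> V" "g y = g x" using same[OF xV(1) y(1)] by auto
      then have "y = Min (g v)" using lv0[of y] y(2) xV(2) by simp
      then show ?thesis using y(3) by simp
    qed
    then show ?thesis unfolding U_def by blast
  qed
  have DOWN: "\<forall>x\<in>V. lv x = k \<longrightarrow> U x \<subseteq> Ac2 (ts + n + k) x" for k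
  proof (induction k)
    case 0
    show ?case
    proof (intro ballI impI)
      fix x assume x: "x \<in> V" "lv x = 0"
      then have "x = Min (g x)" using lv0 by blast
      then have "U x \<subseteq> Ac2 (ts + (n - 1)) x" using root[OF x(1)] by simp
      also have "\<dots> \<subseteq> Ac2 (ts + n + 0) x" by (rule Ac_mono') simp
      finally show "U x \<subseteq> Ac2 (ts + n + 0) x" .
    qed
  next
    case (Suc k)
    show ?case
    proof (intro ballI impI)
      fix x assume x: "x \<in> V" "lv x = Suc k"
      obtain p where p: "p \<in> g x" "E p x" "lv p = k" using par[OF x] by blast
      have pV: "p \<in> V" "g p = g x" using same[OF x(1) p(1)] by auto
      have kn: "Suc k < n" using lv_lt[OF x(1)] x(2) by simp
      define w where "w = n + k"
      have w: "w < 2 * n" using kn by (simp add: w_def)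
      have "sweep_act n w (lv p) = Some True" "sweep_act n w (lv x) = Some False"
        using p(3) x(2) by (auto simp: sweep_act_def w_def)
      then have "Ac2 (ts + w) p \<subseteq> Ac2 (ts + Suc w) x"
        using xfer[OF w x(1) pV(1) Esym[OF p(2)] pV(2)] by blast
      moreover have "U x \<subseteq> Ac2 (ts + n + k) p" using Suc.IH pV p(3) unfolding U_def by auto
      ultimately show "U x \<subseteq> Ac2 (ts + n + Suc k) x" by (auto simp: w_def add.assoc)
    qed
  qed
  show ?thesis
  proof
    fix v assume v: "v \<in> V"
    have "U v \<subseteq> Ac2 (ts + n + lv v) v" using DOWN v by blast
    also have "\<dots> \<subseteq> Ac2 (ts + 2 * n) v" using lv_lt[OF v] by (intro Ac_mono') simp
    finally have "U v \<subseteq> Ac2 (ts + 2 * n) v" .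
    moreover have "Ac2 (ts + 2 * n) v \<subseteq> U v" using UB v by blast
    ultimately show "Ac2 (ts + 2 * card V) v = (\<Union>x\<in>g v. Ac2 ts x)" by (simp add: U_def n_def)
  qed
qed

end

end


lemma bits_differ:
  assumes "u \<noteq> (v::nat)" "u < 2 ^ L" "v < 2 ^ L"
  shows "\<exists>b<L. (u div 2 ^ b) mod 2 \<noteq> (v div 2 ^ b) mod 2"
proof (rule ccontr)
  assume "\<not> ?thesis"
  then have lo: "\<forall>b<L. (u div 2 ^ b) mod 2 = (v div 2 ^ b) mod 2" by blast
  have "bit u b = bit v b" for b
  proof (cases "b < L")
    case True then show ?thesis using lo by (simp add: bit_iff_odd odd_iff_mod_2_eq_one)
  next
    case False
    then have "(2::nat) ^ L \<le> 2 ^ b" by (intro power_increasing) auto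
    then have "u < 2 ^ b" "v < 2 ^ b" using assms by linarith+
    then have "u div 2 ^ b = 0" "v div 2 ^ b = 0" by simp_all
    then show ?thesis by (simp add: bit_iff_odd)
  qed
  then have "u = v" by (simp add: bit_eq_iff)
  then show False using assms by simp
qed

context net
begin

context fixes s :: nat and m :: "'m"
begin

abbreviation "cf' \<equiv> cfg s m"
abbreviation "Ac3 t v \<equiv> set (acc (dec (snd (cfg s m t v))))"
abbreviation "Kn3 t v \<equiv> set (kn (dec (snd (cfg s m t v))))"
abbreviation "ACC3 t v \<equiv> net.ACCs V E N s m t v"
abbreviation "TX3 t v \<equiv> net.TX V E N s m t v"

definition tseg :: "nat \<Rightarrow> nat \<Rightarrow> nat" where
  "tseg r sg = r * RLn (card V) N + 2 * nbits N + sg * SLn (card V)"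

lemma Kn_const: "\<forall>w<k. \<not> commit (card V) N (t + w) \<Longrightarrow> Kn3 (t + k) v = Kn3 t v"
  by (induction k) (auto simp: Kn_Suc[of s m])

lemma Ac_nolisten: "act (cf' t v) \<noteq> Listen \<Longrightarrow> Ac3 (Suc t) v = Ac3 t v"
  by (simp add: Ac_Suc[of s m])

definition RS :: "nat \<Rightarrow> bool" where
  "RS r = (\<forall>v\<in>V. Kn3 (r * RLn (card V) N) v = KK (fx r) (grp r v) \<and> Ac3 (r * RLn (card V) N) v = KK (fx r) (grp r v))"

lemma RS0: "RS 0"
  unfolding RS_def by (simp add: cfg0 init_def KK_def fx0 grp0)

lemma gname_grp: "v \<in> V \<Longrightarrow> gname (KK (fx r) (grp r v)) = cn r v"
  by (simp add: gname_KK cn_def)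

section \<open>Exchange phase\<close>

definition bitof :: "nat \<Rightarrow> nat \<Rightarrow> bool" where "bitof x o' = ((x div 2 ^ (o' div 2)) mod 2 = o' mod 2)"

lemma act_MEx:
  assumes "mode_of (card V) N t = MEx r b p"
  shows "act (cf' t v) = (if (v div 2 ^ b) mod 2 = p then Transmit (cf' t v) else Listen)"
  using assms by (simp add: act_def Let_def)

lemma ex_phase:
  assumes rs: "RS r"
  shows "ofs \<le> 2 * nbits N \<Longrightarrow> \<forall>v\<in>V. Kn3 (r * RLn (card V) N + ofs) v = KK (fx r) (grp r v) \<and>
     Ac3 (r * RLn (card V) N + ofs) v = KK (fx r) (grp r v) \<union>
       {Nb r v (cn r v) u (cn r u) | u. E v u \<and> (\<exists>o'<ofs. bitof u o' \<and> \<not> bitof v o')}"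
proof (induction ofs)
  case 0 then show ?case using rs by (simp add: RS_def)
next
  case (Suc k)
  define t where "t = r * RLn (card V) N + k"
  have k: "k < 2 * nbits N" using Suc by simp
  have md: "mode_of (card V) N t = MEx r (k div 2) (k mod 2)" using mode_EX[OF k] by (simp add: t_def)
  show ?case
  proof
    fix v assume v: "v \<in> V"
    have IH: "Kn3 t v = KK (fx r) (grp r v)"
      "Ac3 t v = KK (fx r) (grp r v) \<union> {Nb r v (cn r v) u (cn r u) | u. E v u \<and> (\<exists>o'<k. bitof u o' \<and> \<not> bitof v o')}"
      using Suc k v by (auto simp: t_def)
    have kn: "Kn3 (Suc t) v = Kn3 t v" using commit_MEx[OF md] by (simp add: Kn_Suc[of s m])
    have tx: "u \<in> TX3 t v \<longleftrightarrow> u \<in> V \<and> E v u \<and> bitof u k" for u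
      using act_MEx[OF md, of u] by (auto simp: TX_def bitof_def)
    have gn: "u \<in> V \<Longrightarrow> gname (Kn3 t u) = cn r u" for u
      using Suc k by (auto simp: t_def gname_grp)
    have "Ac3 (Suc t) v = KK (fx r) (grp r v) \<union> {Nb r v (cn r v) u (cn r u) | u. E v u \<and> (\<exists>o'<Suc k. bitof u o' \<and> \<not> bitof v o')}"
    proof (cases "bitof v k")
      case True
      then have "act (cf' t v) \<noteq> Listen" using act_MEx[OF md, of v] by (simp add: bitof_def)
      then have "Ac3 (Suc t) v = Ac3 t v" by (rule Ac_nolisten)
      moreover have "(\<exists>o'<Suc k. bitof u o' \<and> \<not> bitof v o') \<longleftrightarrow> (\<exists>o'<k. bitof u o' \<and> \<not> bitof v o')" for u
        using True less_Suc_eq by auto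
      ultimately show ?thesis using IH by simp
    next
      case False
      then have L: "act (cf' t v) = Listen" using act_MEx[OF md, of v] by (simp add: bitof_def)
      have "Ac3 (Suc t) v = Ac3 t v \<union> (\<lambda>u. Nb r v (gname (Kn3 t v)) u (gname (Kn3 t u))) ` TX3 t v"
        using L md by (simp add: Ac_Suc[of s m])
      also have "(\<lambda>u. Nb r v (gname (Kn3 t v)) u (gname (Kn3 t u))) ` TX3 t v
          = {Nb r v (cn r v) u (cn r u) | u. E v u \<and> bitof u k}"
        using tx gn v EV by (auto simp: gname_grp IH(1))
      finally show ?thesis using IH False less_Suc_eq by auto
    qed
    then show "Kn3 (r * RLn (card V) N + Suc k) v = KK (fx r) (grp r v) \<and>
      Ac3 (r * RLn (card V) N + Suc k) v = KK (fx r) (grp r v) \<union>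
       {Nb r v (cn r v) u (cn r u) | u. E v u \<and> (\<exists>o'<Suc k. bitof u o' \<and> \<not> bitof v o')}"
      using kn IH(1) by (simp add: t_def)
  qed
qed

lemma ex_done:
  assumes rs: "RS r" and v: "v \<in> V"
  shows "Kn3 (tseg r 0) v = KK (fx r) (grp r v)"
    "Ac3 (tseg r 0) v = KK (fx r) (grp r v) \<union> Nbf (grp r) r v"
proof -
  have "{Nb r v (cn r v) u (cn r u) | u. E v u \<and> (\<exists>o'<2 * nbits N. bitof u o' \<and> \<not> bitof v o')} = Nbf (grp r) r v"
  proof -
    have "(\<exists>o'<2 * nbits N. bitof u o' \<and> \<not> bitof v o')" if e: "E v u" for u
    proof -
      have uv: "u \<noteq> v" "u \<in> V" using e Eirr EV by blast+
      obtain b where b: "b < nbits N" "(u div 2 ^ b) mod 2 \<noteq> (v div 2 ^ b) mod 2"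
        using bits_differ[OF uv(1) Vbits[OF uv(2)] Vbits[OF v]] by blast
      define o' where "o' = 2 * b + (u div 2 ^ b) mod 2"
      have "o' div 2 = b" "o' mod 2 = (u div 2 ^ b) mod 2" by (simp_all add: o'_def)
      then have "bitof u o'" "\<not> bitof v o'" using b(2) by (simp_all add: bitof_def)
      moreover have "o' < 2 * nbits N" using b(1) by (simp add: o'_def)
      ultimately show ?thesis by blast
    qed
    then show ?thesis by (auto simp: Nbf_def cn_def)
  qed
  then show "Kn3 (tseg r 0) v = KK (fx r) (grp r v)"
    "Ac3 (tseg r 0) v = KK (fx r) (grp r v) \<union> Nbf (grp r) r v"
    using ex_phase[OF rs, of "2 * nbits N"] v by (simp_all add: tseg_def)
qed

lemma KK_Un: "KK f (A \<union> B) = KK f A \<union> KK f B" by (auto simp: KK_def)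
lemma KK_Union: "KK f (\<Union>S) = (\<Union>X\<in>S. KK f X)" by (auto simp: KK_def)
lemma KK_mono: "A \<subseteq> B \<Longrightarrow> KK f A \<subseteq> KK f B" by (auto simp: KK_def)

lemma tseg_Suc_sg: "tseg r (Suc sg) = Suc (tseg r sg) + 2 * card V"
  by (simp add: tseg_def SLn_def)

lemma tseg_end: "tseg r (2 * nbits N + 1) = Suc r * RLn (card V) N"
  by (simp add: tseg_def RLn_def)

lemma seg_sweep:
  fixes KG :: "nat \<Rightarrow> fact set" and g :: "nat \<Rightarrow> nat set"
  assumes sg: "sg < 2 * nbits N + 1"
    and K0: "\<forall>v\<in>V. Kn3 (Suc (tseg r sg)) v = KG v"
    and H3: "part V g"
    and H4: "\<forall>v\<in>V. mem (KG v) = g v \<and> gname (KG v) = Min (g v)"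
    and H5: "\<forall>v\<in>V. \<forall>y\<in>g v. KG y = KG v"
    and H6: "\<forall>v\<in>V. \<forall>x\<in>g v. (adjK (KG v))\<^sup>*\<^sup>* (Min (g v)) x"
    and H7: "\<forall>v a b. v \<in> V \<longrightarrow> adjK (KG v) a b \<longrightarrow> E a b"
  shows "\<forall>v\<in>V. Ac3 (tseg r (Suc sg)) v = (\<Union>x\<in>g v. Ac3 (Suc (tseg r sg)) x)"
    and "\<forall>v\<in>V. Kn3 (tseg r (Suc sg)) v = (if even sg then Ac3 (tseg r (Suc sg)) v else KG v)"
proof -
  define ts where "ts = Suc (tseg r sg)"
  have H1: "\<forall>w<2 * card V. mode_of (card V) N (ts + w) = MSw r sg w"
    using mode_SW[OF sg] by (simp add: ts_def tseg_def)
  have nc: "\<not> commit (card V) N (ts + w)" if "w + 1 < 2 * card V" for w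
    using commit_MSw[OF H1[rule_format, of w]] that by simp
  have H2: "\<forall>w<2 * card V. \<forall>v\<in>V. Kn3 (ts + w) v = KG v"
  proof (intro allI impI ballI)
    fix w v assume w: "w < 2 * card V" and v: "v \<in> V"
    have "Kn3 (ts + w) v = Kn3 ts v" using nc w by (intro Kn_const) simp
    then show "Kn3 (ts + w) v = KG v" using K0 v by (simp add: ts_def)
  qed
  have sw: "\<forall>v\<in>V. Ac3 (ts + 2 * card V) v = (\<Union>x\<in>g v. Ac3 ts x)"
    by (rule sweep[OF H1 H2 H3 H4 H5 H6 H7])
  then show "\<forall>v\<in>V. Ac3 (tseg r (Suc sg)) v = (\<Union>x\<in>g v. Ac3 (Suc (tseg r sg)) x)"
    by (simp add: tseg_Suc_sg ts_def)
  have two: "2 \<le> card V" by (rule two)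
  define w0 where "w0 = 2 * card V - 1"
  have w0: "w0 < 2 * card V" "ts + 2 * card V = Suc (ts + w0)" using two by (auto simp: w0_def)
  have cm: "commit (card V) N (ts + w0) \<longleftrightarrow> even sg" using commit_MSw[OF H1[rule_format, OF w0(1)]] two
    by (auto simp: w0_def)
  show "\<forall>v\<in>V. Kn3 (tseg r (Suc sg)) v = (if even sg then Ac3 (tseg r (Suc sg)) v else KG v)"
  proof
    fix v assume v: "v \<in> V"
    have "Kn3 (Suc (ts + w0)) v = (if even sg then Ac3 (Suc (ts + w0)) v else Kn3 (ts + w0) v)"
      using cm by (simp add: Kn_Suc[of s m])
    then show "Kn3 (tseg r (Suc sg)) v = (if even sg then Ac3 (tseg r (Suc sg)) v else KG v)"
      using H2 w0 v by (simp add: tseg_Suc_sg ts_def[symmetric])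
  qed
qed

lemma KKstruct:
  assumes gp: "part V g" and gc: "conn V E g" and sing: "0 < r' \<or> (\<forall>v\<in>V. g v = {v})"
  shows "\<forall>v\<in>V. mem (KK (fx r') (g v)) = g v \<and> gname (KK (fx r') (g v)) = Min (g v)"
    and "\<forall>v\<in>V. \<forall>y\<in>g v. KK (fx r') (g y) = KK (fx r') (g v)"
    and "\<forall>v\<in>V. \<forall>x\<in>g v. (adjK (KK (fx r') (g v)))\<^sup>*\<^sup>* (Min (g v)) x"
    and "\<forall>v a b. v \<in> V \<longrightarrow> adjK (KK (fx r') (g v)) a b \<longrightarrow> E a b"
proof -
  show "\<forall>v\<in>V. mem (KK (fx r') (g v)) = g v \<and> gname (KK (fx r') (g v)) = Min (g v)"
    by (simp add: mem_KK gname_KK)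
  show "\<forall>v\<in>V. \<forall>y\<in>g v. KK (fx r') (g y) = KK (fx r') (g v)"
    using part_same[OF gp] by metis
  show "\<forall>v a b. v \<in> V \<longrightarrow> adjK (KK (fx r') (g v)) a b \<longrightarrow> E a b"
    by (simp add: adjK_KK)
  show "\<forall>v\<in>V. \<forall>x\<in>g v. (adjK (KK (fx r') (g v)))\<^sup>*\<^sup>* (Min (g v)) x"
  proof (intro ballI)
    fix v x assume v: "v \<in> V" and x: "x \<in> g v"
    show "(adjK (KK (fx r') (g v)))\<^sup>*\<^sup>* (Min (g v)) x"
    proof (cases "0 < r'")
      case True
      have "(\<lambda>a b. E a b \<and> a \<in> g v \<and> b \<in> g v)\<^sup>*\<^sup>* (Min (g v)) x"
        using gc v x part_Min_in[OF gp v] unfolding conn_def by blast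
      then show ?thesis
        by (rule rtranclp_mono[THEN predicate2D, rotated]) (auto simp: adjK_KK True)
    next
      case False
      then have "g v = {v}" using sing v by blast
      then show ?thesis using x by simp
    qed
  qed
qed

lemma gather:
  assumes rs: "RS r"
  shows "\<forall>v\<in>V. Kn3 (tseg r 1) v = KK (fx (Suc r)) (grp r v) \<and> Ac3 (tseg r 1) v = KK (fx (Suc r)) (grp r v)"
proof -
  have sg: "0 < 2 * nbits N + 1" by simp
  have md: "mode_of (card V) N (tseg r 0) = MSp r 0" using mode_SP[OF sg] by (simp add: tseg_def)
  have idle: "act (cf' (tseg r 0) v) = Idle" for v using md by (simp add: act_def Let_def)
  have K0: "Kn3 (Suc (tseg r 0)) v = Kn3 (tseg r 0) v" for v
    using commit_MSp[OF md] by (simp add: Kn_Suc[of s m])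
  have A0: "Ac3 (Suc (tseg r 0)) v = Ac3 (tseg r 0) v" for v using idle Ac_nolisten by simp
  have sing: "0 < r \<or> (\<forall>v\<in>V. grp r v = {v})" by (cases r) (auto simp: grp0)
  note S = KKstruct[OF grpP grpC sing]
  have K0': "\<forall>v\<in>V. Kn3 (Suc (tseg r 0)) v = KK (fx r) (grp r v)" using K0 ex_done(1)[OF rs] by simp
  note sw = seg_sweep[OF sg K0' grpP S]
  show ?thesis
  proof
    fix v assume v: "v \<in> V"
    have "Ac3 (tseg r 1) v = (\<Union>x\<in>grp r v. Ac3 (Suc (tseg r 0)) x)" using sw(1) v by simp
    also have "\<dots> = (\<Union>x\<in>grp r v. KK (fx r) (grp r x) \<union> Nbf (grp r) r x)"
      using A0 ex_done(2)[OF rs] grp_sameD[OF v] by auto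
    also have "\<dots> = (\<Union>x\<in>grp r v. KK (fx r) (grp r v) \<union> Nbf (grp r) r x)"
      using grp_sameD[OF v] by (intro SUP_cong) auto
    also have "\<dots> = KK (fx (Suc r)) (grp r v)"
      using grp_self[OF v] by (auto simp: KK_def fx_Suc)
    finally have "Ac3 (tseg r 1) v = KK (fx (Suc r)) (grp r v)" .
    moreover have "Kn3 (tseg r 1) v = Ac3 (tseg r 1) v" using sw(2) v by simp
    ultimately show "Kn3 (tseg r 1) v = KK (fx (Suc r)) (grp r v) \<and> Ac3 (tseg r 1) v = KK (fx (Suc r)) (grp r v)"
      by simp
  qed
qed

section \<open>Sub-phases\<close>

lemma Y_ident:
  assumes inv: "Inv r j g"
  defines "Y \<equiv> \<lambda>x. KK (fx (Suc r)) (g x) \<union> (\<Union>{KK (fx (Suc r)) (g u) | u. u \<in> V \<and> lf r g j u \<and> snd (ep r g j u) \<in> g x})"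
  assumes v: "v \<in> V"
  shows "(\<Union>x\<in>g v. Y x \<union> (if lf r g j x \<and> fst (ep r g j x) = x then Y (snd (ep r g j x)) else {}))
     = KK (fx (Suc r)) (mstep (fx (Suc r)) r j g v)"
proof -
  note P = grpP[of r] grpC[of r]
  have gp': "part V g" using gp[OF P inv] .
  have const: "y \<in> g w \<Longrightarrow> w \<in> V \<Longrightarrow> lf r g j y = lf r g j w \<and> ep r g j y = ep r g j w \<and> y \<in> V \<and> g y = g w" for y w
    using grp_const[OF P inv] by blast
  have Ynl: "Y w = KK (fx (Suc r)) (mstep (fx (Suc r)) r j g w)" if w: "w \<in> V" "\<not> lf r g j w" for w
  proof -
    have "mstep (fx (Suc r)) r j g w = g w \<union> \<Union>{g u | u. u \<in> V \<and> lf r g j u \<and> snd (ep r g j u) \<in> g w}"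
      using mstep_eq[OF P inv, of w] H_def[OF P inv, of w] w(2) by simp
    then show ?thesis unfolding Y_def by (auto simp: KK_Un KK_Union)
  qed
  have Yl: "Y w = KK (fx (Suc r)) (g w)" if w: "w \<in> V" "lf r g j w" for w
  proof -
    have "\<not> (u \<in> V \<and> lf r g j u \<and> snd (ep r g j u) \<in> g w)" for u
    proof
      assume u: "u \<in> V \<and> lf r g j u \<and> snd (ep r g j u) \<in> g w"
      then have "lf r g j (snd (ep r g j u)) = lf r g j w" using const[of "snd (ep r g j u)" w] w by blast
      then show False using center_nonleaf[OF P inv] u w by blast
    qed
    then show ?thesis unfolding Y_def by auto
  qed
  have sub': "g w \<subseteq> mstep (fx (Suc r)) r j g w" if "w \<in> V" for w using g_sub_g'[OF P inv that] .
  show ?thesis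
  proof (cases "lf r g j v")
    case False
    have "\<forall>x\<in>g v. Y x \<union> (if lf r g j x \<and> fst (ep r g j x) = x then Y (snd (ep r g j x)) else {})
          = KK (fx (Suc r)) (mstep (fx (Suc r)) r j g v)"
    proof
      fix x assume x: "x \<in> g v"
      have c: "lf r g j x = lf r g j v" "x \<in> V" "g x = g v" using const[OF x v] by auto
      have "Y x = KK (fx (Suc r)) (mstep (fx (Suc r)) r j g x)" using Ynl c False by simp
      moreover have "mstep (fx (Suc r)) r j g x = mstep (fx (Suc r)) r j g v"
        using g'_same[OF P inv v] sub'[OF v] x by blast
      ultimately show "Y x \<union> (if lf r g j x \<and> fst (ep r g j x) = x then Y (snd (ep r g j x)) else {})
          = KK (fx (Suc r)) (mstep (fx (Suc r)) r j g v)" using c False by simp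
    qed
    moreover have "g v \<noteq> {}" using part_Min_in[OF gp' v] by blast
    ultimately show ?thesis by simp
  next
    case True
    define c where "c = fst (ep r g j v)"
    define y0 where "y0 = snd (ep r g j v)"
    have cg: "c \<in> g v" and y0V: "y0 \<in> V" using ep_facts[OF P inv v True] by (auto simp: c_def y0_def)
    have cc: "lf r g j c" "ep r g j c = ep r g j v" "c \<in> V" using const[OF cg v] True by auto
    have y0nl: "\<not> lf r g j y0" using center_nonleaf[OF P inv v True] by (simp add: y0_def)
    have Hv: "H r g j v = g y0" using H_def[OF P inv, of v] True by (simp add: y0_def)
    have Hy: "H r g j y0 = g y0" using H_def[OF P inv, of y0] y0nl by simp
    have gg: "mstep (fx (Suc r)) r j g y0 = mstep (fx (Suc r)) r j g v"
      using mstep_eq[OF P inv, of v] mstep_eq[OF P inv, of y0] Hv Hy by simp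
    have Yy0: "Y y0 = KK (fx (Suc r)) (mstep (fx (Suc r)) r j g v)" using Ynl[OF y0V y0nl] gg by simp
    have each: "Y x \<union> (if lf r g j x \<and> fst (ep r g j x) = x then Y (snd (ep r g j x)) else {})
        = KK (fx (Suc r)) (g v) \<union> (if x = c then KK (fx (Suc r)) (mstep (fx (Suc r)) r j g v) else {})"
      if x: "x \<in> g v" for x
    proof -
      have cx: "lf r g j x" "ep r g j x = ep r g j v" "x \<in> V" "g x = g v" using const[OF x v] True by auto
      have "Y x = KK (fx (Suc r)) (g v)" using Yl[OF cx(3) cx(1)] cx(4) by simp
      moreover have "(lf r g j x \<and> fst (ep r g j x) = x) \<longleftrightarrow> x = c" using cx by (auto simp: c_def)
      ultimately show ?thesis using cx(2) Yy0 cc(2) by (auto simp: y0_def)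
    qed
    have "(\<Union>x\<in>g v. Y x \<union> (if lf r g j x \<and> fst (ep r g j x) = x then Y (snd (ep r g j x)) else {}))
        = (\<Union>x\<in>g v. KK (fx (Suc r)) (g v) \<union> (if x = c then KK (fx (Suc r)) (mstep (fx (Suc r)) r j g v) else {}))"
      using each by (intro SUP_cong) auto
    also have "\<dots> = KK (fx (Suc r)) (g v) \<union> KK (fx (Suc r)) (mstep (fx (Suc r)) r j g v)"
      using cg by auto
    also have "\<dots> = KK (fx (Suc r)) (mstep (fx (Suc r)) r j g v)"
      using KK_mono[OF sub'[OF v]] by blast
    finally show ?thesis .
  qed
qed

lemma subphase:
  assumes j: "j < nbits N"
    and st: "\<forall>v\<in>V. Kn3 (tseg r (2 * j + 1)) v = KK (fx (Suc r)) (gsub (fx (Suc r)) r (grp r) j v)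
              \<and> Ac3 (tseg r (2 * j + 1)) v = KK (fx (Suc r)) (gsub (fx (Suc r)) r (grp r) j v)"
  shows "\<forall>v\<in>V. Kn3 (tseg r (2 * j + 3)) v = KK (fx (Suc r)) (gsub (fx (Suc r)) r (grp r) (Suc j) v)
              \<and> Ac3 (tseg r (2 * j + 3)) v = KK (fx (Suc r)) (gsub (fx (Suc r)) r (grp r) (Suc j) v)"
proof -
  note P = grpP[of r] grpC[of r]
  define g where "g = gsub (fx (Suc r)) r (grp r) j"
  define KG where "KG v = KK (fx (Suc r)) (g v)" for v
  have inv: "Inv r j g" unfolding g_def by (rule Inv_gsub[OF P])
  have gp': "part V g" using gp[OF P inv] .
  have gc': "conn V E g" using gcn[OF P inv] .
  note S = KKstruct[OF gp' gc' disjI1[OF zero_less_Suc[of r]]]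
  have const: "y \<in> g w \<Longrightarrow> w \<in> V \<Longrightarrow> lf r g j y = lf r g j w \<and> ep r g j y = ep r g j w \<and> y \<in> V \<and> g y = g w" for y w
    using grp_const[OF P inv] by blast
  have isep_iff: "isep (KG u) r j u \<longleftrightarrow> lf r g j u \<and> fst (ep r g j u) = u" for u
    by (simp add: isep_def KG_def lf_def[OF P inv] ep_def[OF P inv])
  have epK_eq: "epK (KG u) r j = ep r g j u" for u by (simp add: KG_def ep_def[OF P inv])
  define tA where "tA = tseg r (2 * j + 1)"
  define tB where "tB = tseg r (2 * j + 2)"
  have sgA: "2 * j + 1 < 2 * nbits N + 1" and sgB: "2 * j + 2 < 2 * nbits N + 1" using j by simp_all
  have mA: "mode_of (card V) N tA = MSp r (2 * j + 1)" using mode_SP[OF sgA] by (simp add: tA_def tseg_def)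
  have mB: "mode_of (card V) N tB = MSp r (2 * j + 2)" using mode_SP[OF sgB] by (simp add: tB_def tseg_def)
  have jA: "jof (2 * j + 1) = j" and jB: "jof (2 * j + 2) = j" by (simp_all add: jof_def)
  have KA: "\<forall>v\<in>V. Kn3 tA v = KG v" "\<forall>v\<in>V. Ac3 tA v = KG v" using st by (simp_all add: tA_def KG_def g_def)
  have actA: "act (cf' tA v) = (if lf r g j v \<and> fst (ep r g j v) = v then Transmit (cf' tA v) else Listen)"
    if v: "v \<in> V" for v
    using mA KA v jA isep_iff[of v] by (simp add: act_def Let_def)
  have A1: "Ac3 (Suc tA) v = KG v \<union> (\<Union>{KG u | u. u \<in> V \<and> lf r g j u \<and> fst (ep r g j u) = u \<and> snd (ep r g j u) = v})"
    if v: "v \<in> V" for v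
  proof (cases "lf r g j v \<and> fst (ep r g j v) = v")
    case True
    have "\<not> (u \<in> V \<and> lf r g j u \<and> fst (ep r g j u) = u \<and> snd (ep r g j u) = v)" for u
      using center_nonleaf[OF P inv, of u] True by auto
    then have e: "{KG u | u. u \<in> V \<and> lf r g j u \<and> fst (ep r g j u) = u \<and> snd (ep r g j u) = v} = {}" by blast
    show ?thesis using Ac_nolisten[of tA v] actA[OF v] True KA v unfolding e by simp
  next
    case False
    have L: "act (cf' tA v) = Listen" using actA[OF v] False by simp
    have acc: "u \<in> ACC3 tA v \<longleftrightarrow> u \<in> V \<and> lf r g j u \<and> fst (ep r g j u) = u \<and> snd (ep r g j u) = v" for u
    proof -
      have "u \<in> ACC3 tA v \<longleftrightarrow> u \<in> V \<and> E v u \<and> is_transmit (act (cf' tA u)) \<and> isep (KG u) r j u \<and> snd (epK (KG u) r j) = v"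
        using mA KA jA v by (auto simp: ACCs_def TX_def accepts_def Let_def)
      moreover have "u \<in> V \<Longrightarrow> is_transmit (act (cf' tA u)) \<longleftrightarrow> lf r g j u \<and> fst (ep r g j u) = u"
        using actA by simp
      moreover have "u \<in> V \<Longrightarrow> lf r g j u \<Longrightarrow> fst (ep r g j u) = u \<Longrightarrow> snd (ep r g j u) = v \<Longrightarrow> E v u"
        using ep_facts[OF P inv, of u] Esym by metis
      ultimately show ?thesis by (auto simp: isep_iff epK_eq)
    qed
    have "Ac3 (Suc tA) v = Ac3 tA v \<union> (\<Union>u\<in>ACC3 tA v. Ac3 tA u)"
      using L mA by (simp add: Ac_Suc[of s m])
    also have "\<dots> = KG v \<union> (\<Union>{KG u | u. u \<in> V \<and> lf r g j u \<and> fst (ep r g j u) = u \<and> snd (ep r g j u) = v})"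
    proof -
      have e1: "ACC3 tA v = {u. u \<in> V \<and> lf r g j u \<and> fst (ep r g j u) = u \<and> snd (ep r g j u) = v}"
        using acc by blast
      have e2: "(\<Union>u\<in>ACC3 tA v. Ac3 tA u) = (\<Union>u\<in>ACC3 tA v. KG u)"
        using KA e1 by (intro SUP_cong) auto
      have e3: "(\<Union>u\<in>ACC3 tA v. KG u) = \<Union>{KG u | u. u \<in> V \<and> lf r g j u \<and> fst (ep r g j u) = u \<and> snd (ep r g j u) = v}"
        unfolding e1 by blast
      show ?thesis using e2 e3 KA v by simp
    qed
    finally show ?thesis .
  qed
  have KA1: "\<forall>v\<in>V. Kn3 (Suc tA) v = KG v" using KA commit_MSp[OF mA] by (simp add: Kn_Suc[of s m])
  note sw1 = seg_sweep[OF sgA KA1[unfolded tA_def] gp' S[unfolded KG_def[symmetric]]]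
  have tBeq: "tseg r (Suc (2 * j + 1)) = tB" by (simp add: tB_def)
  define Y where "Y x = KK (fx (Suc r)) (g x) \<union> (\<Union>{KK (fx (Suc r)) (g u) | u. u \<in> V \<and> lf r g j u \<and> snd (ep r g j u) \<in> g x})" for x
  have AB: "Ac3 tB v = Y v" if v: "v \<in> V" for v
  proof -
    have "Ac3 tB v = (\<Union>x\<in>g v. Ac3 (Suc tA) x)" using sw1(1) v tBeq by (simp add: tA_def)
    also have "\<dots> = KG v \<union> (\<Union>{KG u | u. u \<in> V \<and> lf r g j u \<and> fst (ep r g j u) = u \<and> snd (ep r g j u) \<in> g v})"
    proof -
      have kc: "\<forall>x\<in>g v. KG x = KG v" using S(2) v by (simp add: KG_def)
      have xv: "\<forall>x\<in>g v. x \<in> V" using const v by blast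
      have ne: "g v \<noteq> {}" using part_Min_in[OF gp' v] by blast
      have "(\<Union>x\<in>g v. Ac3 (Suc tA) x) = (\<Union>x\<in>g v. KG v \<union> \<Union>{KG u | u. u \<in> V \<and> lf r g j u \<and> fst (ep r g j u) = u \<and> snd (ep r g j u) = x})"
        using A1 kc xv by (intro SUP_cong) auto
      also have "\<dots> = KG v \<union> (\<Union>{KG u | u. u \<in> V \<and> lf r g j u \<and> fst (ep r g j u) = u \<and> snd (ep r g j u) \<in> g v})"
      proof (rule set_eqI)
        fix z
        have mU: "z \<in> \<Union>{KG u | u. Q u} \<longleftrightarrow> (\<exists>u. Q u \<and> z \<in> KG u)" for Q by blast
        show "z \<in> (\<Union>x\<in>g v. KG v \<union> \<Union>{KG u | u. u \<in> V \<and> lf r g j u \<and> fst (ep r g j u) = u \<and> snd (ep r g j u) = x})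
            \<longleftrightarrow> z \<in> KG v \<union> (\<Union>{KG u | u. u \<in> V \<and> lf r g j u \<and> fst (ep r g j u) = u \<and> snd (ep r g j u) \<in> g v})"
          unfolding UN_iff Un_iff mU using ne by blast
      qed
      finally show ?thesis .
    qed
    also have "\<dots> = Y v"
    proof -
      have "(\<exists>u. X = KG u \<and> u \<in> V \<and> lf r g j u \<and> fst (ep r g j u) = u \<and> snd (ep r g j u) \<in> g v)
          \<longleftrightarrow> (\<exists>u. X = KG u \<and> u \<in> V \<and> lf r g j u \<and> snd (ep r g j u) \<in> g v)" for X
      proof
        assume "\<exists>u. X = KG u \<and> u \<in> V \<and> lf r g j u \<and> snd (ep r g j u) \<in> g v"
        then obtain u where u: "X = KG u" "u \<in> V" "lf r g j u" "snd (ep r g j u) \<in> g v" by blast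
        define c where "c = fst (ep r g j u)"
        have cg: "c \<in> g u" using ep_facts[OF P inv u(2) u(3)] by (simp add: c_def)
        have cc: "lf r g j c" "ep r g j c = ep r g j u" "c \<in> V" "g c = g u" using const[OF cg u(2)] u(3) by auto
        show "\<exists>u. X = KG u \<and> u \<in> V \<and> lf r g j u \<and> fst (ep r g j u) = u \<and> snd (ep r g j u) \<in> g v"
          using cc u by (intro exI[of _ c]) (auto simp: KG_def c_def)
      qed blast
      then show ?thesis unfolding Y_def KG_def by auto
    qed
    finally show ?thesis .
  qed
  have KB: "\<forall>v\<in>V. Kn3 tB v = KG v" using sw1(2) tBeq by simp
  have actB: "act (cf' tB v) = (if lf r g j v \<and> fst (ep r g j v) = v then Listen else Transmit (cf' tB v))"
    if v: "v \<in> V" for v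
    using mB KB v jB isep_iff[of v] by (simp add: act_def Let_def)
  have B1: "Ac3 (Suc tB) v = Y v \<union> (if lf r g j v \<and> fst (ep r g j v) = v then Y (snd (ep r g j v)) else {})"
    if v: "v \<in> V" for v
  proof (cases "lf r g j v \<and> fst (ep r g j v) = v")
    case False
    have "act (cf' tB v) \<noteq> Listen" using actB[OF v] False by simp
    then have "Ac3 (Suc tB) v = Y v" using Ac_nolisten[of tB v] AB[OF v] by simp
    then show ?thesis by (simp only: if_not_P[OF False] Un_empty_right)
  next
    case True
    define y0 where "y0 = snd (ep r g j v)"
    have y0: "y0 \<in> V" "E v y0" using ep_facts[OF P inv v] True by (auto simp: y0_def)
    have y0nl: "\<not> lf r g j y0" using center_nonleaf[OF P inv v] True by (simp add: y0_def)
    have L: "act (cf' tB v) = Listen" using actB[OF v] True by simp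
    have acc: "u \<in> ACC3 tB v \<longleftrightarrow> u = y0" for u
    proof -
      have "u \<in> ACC3 tB v \<longleftrightarrow> u \<in> V \<and> E v u \<and> is_transmit (act (cf' tB u)) \<and> u = snd (epK (KG v) r j)"
        using mB KB jB v by (auto simp: ACCs_def TX_def accepts_def Let_def)
      moreover have "is_transmit (act (cf' tB y0))" using actB[OF y0(1)] y0nl by simp
      ultimately show ?thesis using y0 epK_eq by (auto simp: y0_def)
    qed
    have "Ac3 (Suc tB) v = Ac3 tB v \<union> (\<Union>u\<in>ACC3 tB v. Ac3 tB u)"
      using L mB by (simp add: Ac_Suc[of s m])
    also have "\<dots> = Y v \<union> Y y0" using acc AB v y0(1) by auto
    finally show ?thesis using True by (simp add: y0_def)
  qed
  have KB1: "\<forall>v\<in>V. Kn3 (Suc tB) v = KG v" using KB commit_MSp[OF mB] by (simp add: Kn_Suc[of s m])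
  note sw2 = seg_sweep[OF sgB KB1[unfolded tB_def] gp' S[unfolded KG_def[symmetric]]]
  have tCeq: "tseg r (Suc (2 * j + 2)) = tseg r (2 * j + 3)" by (simp add: numeral_3_eq_3)
  show ?thesis
  proof
    fix v assume v: "v \<in> V"
    have "Ac3 (tseg r (2 * j + 3)) v = (\<Union>x\<in>g v. Ac3 (Suc tB) x)" using sw2(1) v tCeq by (simp add: tB_def)
    also have "\<dots> = (\<Union>x\<in>g v. Y x \<union> (if lf r g j x \<and> fst (ep r g j x) = x then Y (snd (ep r g j x)) else {}))"
    proof (rule SUP_cong)
      fix x assume "x \<in> g v"
      then have "x \<in> V" using const[of x v] v by blast
      then show "Ac3 (Suc tB) x = Y x \<union> (if lf r g j x \<and> fst (ep r g j x) = x then Y (snd (ep r g j x)) else {})"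
        by (rule B1)
    qed simp
    also have "\<dots> = KK (fx (Suc r)) (mstep (fx (Suc r)) r j g v)"
      unfolding Y_def by (rule Y_ident[OF inv v])
    finally have A: "Ac3 (tseg r (2 * j + 3)) v = KK (fx (Suc r)) (gsub (fx (Suc r)) r (grp r) (Suc j) v)"
      by (simp add: g_def)
    moreover have "Kn3 (tseg r (2 * j + 3)) v = Ac3 (tseg r (2 * j + 3)) v" using sw2(2) v tCeq by simp
    ultimately show "Kn3 (tseg r (2 * j + 3)) v = KK (fx (Suc r)) (gsub (fx (Suc r)) r (grp r) (Suc j) v)
              \<and> Ac3 (tseg r (2 * j + 3)) v = KK (fx (Suc r)) (gsub (fx (Suc r)) r (grp r) (Suc j) v)" by simp
  qed
qed

lemma round_step:
  assumes rs: "RS r" shows "RS (Suc r)"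
proof -
  have "\<forall>v\<in>V. Kn3 (tseg r (2 * j + 1)) v = KK (fx (Suc r)) (gsub (fx (Suc r)) r (grp r) j v)
              \<and> Ac3 (tseg r (2 * j + 1)) v = KK (fx (Suc r)) (gsub (fx (Suc r)) r (grp r) j v)"
    if "j \<le> nbits N" for j
    using that
  proof (induction j)
    case 0 then show ?case using gather[OF rs] by simp
  next
    case (Suc j)
    have e: "2 * Suc j + 1 = 2 * j + 3" by simp
    have j: "j < nbits N" using Suc.prems by simp
    have IH: "\<forall>v\<in>V. Kn3 (tseg r (2 * j + 1)) v = KK (fx (Suc r)) (gsub (fx (Suc r)) r (grp r) j v)
              \<and> Ac3 (tseg r (2 * j + 1)) v = KK (fx (Suc r)) (gsub (fx (Suc r)) r (grp r) j v)"
      using Suc.IH j by simp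
    show ?case unfolding e by (rule subphase[OF j IH])
  qed
  from this[of "nbits N"] show ?thesis
    unfolding RS_def tseg_end grp_Suc[symmetric] by simp
qed

lemma RS_all: "RS r"
  by (induction r) (auto intro: round_step RS0)

end

end


lemma card_insert_Suc: "card (insert x A) \<le> Suc (card A)"
  by (cases "finite A") (auto simp: card_insert_if)

lemma card4: "card {a, b, c, d :: nat} \<le> 4"
  using card_length[of "[a, b, c, d]"] by simp

lemma sweep_act_card: "card {w. w < 2 * n \<and> sweep_act n w l \<noteq> None} \<le> 4"
proof -
  have "{w. w < 2 * n \<and> sweep_act n w l \<noteq> None} \<subseteq> {n - 1 - l, n - 2 - l, n + l, n + l - 1}"
    by (auto simp: sweep_act_def split: if_splits)
  then have "card {w. w < 2 * n \<and> sweep_act n w l \<noteq> None} \<le> card {n - 1 - l, n - 2 - l, n + l, n + l - 1}"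
    by (intro card_mono) auto
  then show ?thesis using card4 by (rule le_trans)
qed

context net
begin

context fixes s :: nat and m :: "'m"
begin

abbreviation "KnX t v \<equiv> set (kn (dec (snd (cfg s m t v))))"

definition Wset :: "nat \<Rightarrow> nat \<Rightarrow> nat \<Rightarrow> nat set" where
  "Wset v r sg = {w. w < 2 * card V \<and> sweep_act (card V) w (lvl (KnX (Suc (tseg r sg)) v) v) \<noteq> None}"

definition ACTS :: "nat \<Rightarrow> nat \<Rightarrow> nat set" where
  "ACTS v r = (\<lambda>o'. r * RLn (card V) N + o') ` {..<2 * nbits N} \<union>
     (\<Union>sg<2 * nbits N + 1. insert (tseg r sg) ((\<lambda>w. Suc (tseg r sg) + w) ` Wset v r sg))"

lemma ACTS_card: "card (ACTS v r) \<le> 2 * nbits N + (2 * nbits N + 1) * 5"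
proof -
  have c1: "card ((\<lambda>o'. r * RLn (card V) N + o') ` {..<2 * nbits N}) \<le> 2 * nbits N"
    using card_image_le[of "{..<2 * nbits N}"] by simp
  have c2: "card (insert (tseg r sg) ((\<lambda>w. Suc (tseg r sg) + w) ` Wset v r sg)) \<le> 5" for sg
  proof -
    have "card (insert (tseg r sg) ((\<lambda>w. Suc (tseg r sg) + w) ` Wset v r sg))
        \<le> Suc (card ((\<lambda>w. Suc (tseg r sg) + w) ` Wset v r sg))" by (rule card_insert_Suc)
    also have "card ((\<lambda>w. Suc (tseg r sg) + w) ` Wset v r sg) \<le> card (Wset v r sg)"
      by (rule card_image_le) (simp add: Wset_def)
    also have "card (Wset v r sg) \<le> 4" unfolding Wset_def by (rule sweep_act_card)
    finally show ?thesis by simp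
  qed
  have "card (\<Union>sg<2 * nbits N + 1. insert (tseg r sg) ((\<lambda>w. Suc (tseg r sg) + w) ` Wset v r sg))
      \<le> (\<Sum>sg<2 * nbits N + 1. card (insert (tseg r sg) ((\<lambda>w. Suc (tseg r sg) + w) ` Wset v r sg)))"
    by (rule card_UN_le) simp
  also have "\<dots> \<le> (\<Sum>sg<2 * nbits N + 1. 5)" by (rule sum_mono) (rule c2)
  also have "\<dots> = (2 * nbits N + 1) * 5" by simp
  finally have "card (\<Union>sg<2 * nbits N + 1. insert (tseg r sg) ((\<lambda>w. Suc (tseg r sg) + w) ` Wset v r sg)) \<le> (2 * nbits N + 1) * 5" .
  then show ?thesis unfolding ACTS_def using c1 card_Un_le by (meson add_le_mono le_trans)
qed

lemma active_in_ACTS: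
  assumes t1: "r * RLn (card V) N \<le> t" and t2: "t < Suc r * RLn (card V) N"
    and a: "act (cfg s m t v) \<noteq> Idle"
  shows "t \<in> ACTS v r"
proof -
  define RL where "RL = RLn (card V) N"
  define SL where "SL = SLn (card V)"
  define L where "L = nbits N"
  define o' where "o' = t - r * RL"
  have t: "t = r * RL + o'" "o' < RL" using t1 t2 by (auto simp: o'_def RL_def)
  show ?thesis
  proof (cases "o' < 2 * L")
    case True
    then show ?thesis unfolding ACTS_def using t by (auto simp: RL_def L_def)
  next
    case False
    define q where "q = o' - 2 * L"
    define sg where "sg = q div SL"
    define p where "p = q mod SL"
    have SLp: "0 < SL" by (simp add: SL_def SLn_def)
    have q: "q = sg * SL + p" by (simp add: sg_def p_def)
    have qlt: "q < (2 * L + 1) * SL" using t(2) False by (simp add: q_def RL_def RLn_def L_def SL_def)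
    have sg: "sg < 2 * L + 1"
    proof (rule ccontr)
      assume "\<not> sg < 2 * L + 1"
      then have "(2 * L + 1) * SL \<le> sg * SL" by (intro mult_le_mono1) simp
      then show False using q qlt by simp
    qed
    have tt: "t = tseg r sg + p" using t False q by (simp add: tseg_def RL_def SL_def L_def q_def)
    show ?thesis
    proof (cases p)
      case 0
      then show ?thesis unfolding ACTS_def using sg tt by (auto simp: L_def)
    next
      case (Suc w)
      have w: "w < 2 * card V" using Suc p_def SLp by (metis SL_def SLn_def Suc_less_eq mod_less_divisor add.commute plus_1_eq_Suc)
      have tw: "t = Suc (tseg r sg) + w" using tt Suc by simp
      have md: "mode_of (card V) N t = MSw r sg w" using mode_SW[OF sg[unfolded L_def] w] tw by (simp add: tseg_def)
      have kn: "KnX t v = KnX (Suc (tseg r sg)) v"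
      proof -
        have "\<forall>w'<w. \<not> commit (card V) N (Suc (tseg r sg) + w')"
        proof (intro allI impI)
          fix w' assume "w' < w"
          then have "w' < 2 * card V" "w' + 1 \<noteq> 2 * card V" using w by auto
          then show "\<not> commit (card V) N (Suc (tseg r sg) + w')"
            using commit_MSw[OF mode_SW[OF sg[unfolded L_def]]] by (simp add: tseg_def)
        qed
        then show ?thesis using Kn_const tw by metis
      qed
      have "act (cfg s m t v) = (case sweep_act (card V) w (lvl (KnX t v) v) of
            Some True \<Rightarrow> Transmit (cfg s m t v) | Some False \<Rightarrow> Listen | None \<Rightarrow> Idle)"
        by (rule act_MSw[OF md])
      then have "sweep_act (card V) w (lvl (KnX t v) v) \<noteq> None"
        using a by (auto split: option.splits bool.splits)
      then have "w \<in> Wset v r sg" using w kn by (simp add: Wset_def)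
      then show ?thesis unfolding ACTS_def using sg tw by (auto simp: L_def)
    qed
  qed
qed

lemma energy_bound:
  "card {t. t < R * RLn (card V) N \<and> act (cfg s m t v) \<noteq> Idle} \<le> R * (2 * nbits N + (2 * nbits N + 1) * 5)"
proof -
  have "{t. t < R * RLn (card V) N \<and> act (cfg s m t v) \<noteq> Idle} \<subseteq> (\<Union>r<R. ACTS v r)"
  proof
    fix t assume t: "t \<in> {t. t < R * RLn (card V) N \<and> act (cfg s m t v) \<noteq> Idle}"
    define r where "r = t div RLn (card V) N"
    have RLp: "0 < RLn (card V) N" by (simp add: RLn_def SLn_def)
    have "r * RLn (card V) N \<le> t" unfolding r_def by (metis div_mult_mod_eq le_add1)
    moreover have "t < Suc r * RLn (card V) N" using RLp
      by (simp add: r_def) (metis add.commute div_mult_mod_eq mod_less_divisor nat_add_left_cancel_less)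
    moreover have "r < R" using t RLp by (simp add: r_def less_mult_imp_div_less)
    ultimately show "t \<in> (\<Union>r<R. ACTS v r)" using active_in_ACTS t by blast
  qed
  then have "card {t. t < R * RLn (card V) N \<and> act (cfg s m t v) \<noteq> Idle} \<le> card (\<Union>r<R. ACTS v r)"
    by (intro card_mono) (auto simp: ACTS_def Wset_def)
  also have "\<dots> \<le> (\<Sum>r<R. card (ACTS v r))" by (rule card_UN_le) simp
  also have "\<dots> \<le> (\<Sum>r<R. 2 * nbits N + (2 * nbits N + 1) * 5)" by (rule sum_mono) (rule ACTS_card)
  finally show ?thesis by simp
qed

end

end


lemma exec_relabel:
  assumes inj: "inj_on ID V" and finV: "finite V" and sV: "s \<in> V"
  shows "v \<in> V \<Longrightarrow> exec A N V E ID s m t v =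
     exec A N (ID ` V) (\<lambda>a b. \<exists>u\<in>V. \<exists>w\<in>V. ID u = a \<and> ID w = b \<and> E u w) (\<lambda>x. x) (ID s) m t (ID v)"
proof (induction t arbitrary: v)
  case 0
  have "card (ID ` V) = card V" using inj by (rule card_image)
  moreover have "(ID v = ID s) = (v = s)" using inj 0 sV by (auto dest: inj_onD)
  ultimately show ?case by simp
next
  case (Suc t)
  define E' where "E' = (\<lambda>a b. \<exists>u\<in>V. \<exists>w\<in>V. ID u = a \<and> ID w = b \<and> E u w)"
  define cur where "cur = exec A N V E ID s m t"
  define cur' where "cur' = exec A N (ID ` V) E' (\<lambda>x. x) (ID s) m t"
  have IH: "u \<in> V \<Longrightarrow> cur u = cur' (ID u)" for u using Suc.IH by (simp add: cur_def cur'_def E'_def)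
  define B where "B = {u \<in> V. E v u \<and> is_transmit (a_act A (cur u))}"
  have finB: "finite B" using finV by (simp add: B_def)
  have BV: "B \<subseteq> V" by (auto simp: B_def)
  have setEq: "{a \<in> ID ` V. E' (ID v) a \<and> is_transmit (a_act A (cur' a))} = ID ` B"
  proof
    show "{a \<in> ID ` V. E' (ID v) a \<and> is_transmit (a_act A (cur' a))} \<subseteq> ID ` B"
    proof
      fix a assume "a \<in> {a \<in> ID ` V. E' (ID v) a \<and> is_transmit (a_act A (cur' a))}"
      then obtain w u w' where w: "w \<in> V" "a = ID w" "u \<in> V" "w' \<in> V" "ID u = ID v" "ID w' = ID w" "E u w'"
        "is_transmit (a_act A (cur' a))" unfolding E'_def by blast
      have "u = v" "w' = w" using w inj Suc.prems by (auto dest: inj_onD)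
      then show "a \<in> ID ` B" using w IH[of w] by (auto simp: B_def)
    qed
    show "ID ` B \<subseteq> {a \<in> ID ` V. E' (ID v) a \<and> is_transmit (a_act A (cur' a))}"
      using IH Suc.prems by (auto simp: B_def E'_def)
  qed
  have ms: "mset_set (ID ` B) = image_mset ID (mset_set B)"
    using inj_on_subset[OF inj BV] by (simp add: image_mset_mset_set)
  have "image_mset (\<lambda>a. payload (a_act A (cur' a))) (mset_set {a \<in> ID ` V. E' (ID v) a \<and> is_transmit (a_act A (cur' a))})
      = image_mset (\<lambda>u. payload (a_act A (cur u))) (mset_set B)"
    unfolding setEq ms image_mset.compositionality
    by (rule image_mset_cong) (use finB BV IH in auto)
  then show ?case using IH[OF Suc.prems]
    by (simp add: cur_def cur'_def E'_def B_def Let_def)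
qed

lemma nbits_log: "1 \<le> N \<Longrightarrow> real (nbits N) \<le> log 2 (real N) + 1"
proof -
  assume N: "1 \<le> N"
  have "real (nbits N - 1) \<le> log 2 (real N)" using le_log2_of_power[OF nbits_le[OF N]] by simp
  then show ?thesis using nbits_pos[OF N] by (simp add: of_nat_diff)
qed

lemma main_net:
  fixes m :: 'm
  assumes rn: "radio_network V E" and VN: "V \<subseteq> {1..N}" and two: "2 \<le> card V" and sV: "s \<in> V"
  shows "\<exists>T. T = 2 * nbits (card V) * RLn (card V) N \<and>
     (\<forall>v\<in>V. a_out ALG (exec ALG N V E (\<lambda>x. x) s m T v) = Some m) \<and>
     (\<forall>v\<in>V. energy ALG N V E (\<lambda>x. x) s m T v \<le> 2 * nbits (card V) * (2 * nbits N + (2 * nbits N + 1) * 5))"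
proof -
  interpret net V E N using rn VN two by unfold_locales
  define R where "R = 2 * nbits (card V)"
  have out: "a_out ALG (exec ALG N V E (\<lambda>x. x) s m (R * RLn (card V) N) v) = Some m" if v: "v \<in> V" for v
  proof -
    have rs: "net.RS V E N s m R" by (rule RS_all)
    have "set (acc (dec (snd (cfg s m (R * RLn (card V) N) v)))) = KK (fx R) (grp R v)"
      using rs v unfolding RS_def by blast
    also have "grp R v = V" using final_grp v by (simp add: R_def)
    finally have "Me s \<in> set (acc (dec (snd (cfg s m (R * RLn (card V) N) v))))"
      using sV by (auto simp: KK_def fx_Me)
    moreover have "fst (cfg s m (R * RLn (card V) N) v) = (if Me s \<in> set (acc (dec (snd (cfg s m (R * RLn (card V) N) v)))) then Some m else None)"
      by (rule msg_inv)
    ultimately show ?thesis by (simp add: ALG_def cfg_def)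
  qed
  have en: "energy ALG N V E (\<lambda>x. x) s m (R * RLn (card V) N) v \<le> R * (2 * nbits N + (2 * nbits N + 1) * 5)" for v
  proof -
    have "card {t. t < R * RLn (card V) N \<and> act (cfg s m t v) \<noteq> Idle} \<le> R * (2 * nbits N + (2 * nbits N + 1) * 5)"
      by (rule energy_bound)
    then show ?thesis by (simp add: energy_def ALG_def cfg_def)
  qed
  show ?thesis using out en by (auto simp: R_def)
qed

theorem theorem9:
  shows "\<exists>(A :: 'm algo) (C :: real). C > 0 \<and>
    (\<forall>V E ID N s (m :: 'm).
       radio_network V E \<and> id_assignment V ID N \<and> s \<in> V \<longrightarrow>
       (\<exists>T :: nat.
          real T \<le> C * real (card V) * (log 2 (real (card V)) + 1) * (log 2 (real N) + 1) \<and>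
          (\<forall>v\<in>V. a_out A (exec A N V E ID s m T v) = Some m) \<and>
          (\<forall>v\<in>V. real (energy A N V E ID s m T v)
                   \<le> C * (log 2 (real (card V)) + 1) * (log 2 (real N) + 1))))"
proof (rule exI[of _ ALG], rule exI[of _ 100], intro conjI allI impI)
  show "(100::real) > 0" by simp
  fix V E ID N s and m :: 'm
  assume a: "radio_network V E \<and> id_assignment V ID N \<and> s \<in> V"
  then have rn: "radio_network V E" and ia: "id_assignment V ID N" and sV: "s \<in> V" by auto
  have finV: "finite V" and Vne: "V \<noteq> {}" using rn by (auto simp: radio_network_def)
  have inj: "inj_on ID V" and IDN: "ID ` V \<subseteq> {1..N}" using ia by (auto simp: id_assignment_def)
  have n1: "1 \<le> card V" using finV Vne by (simp add: Suc_le_eq card_gt_0_iff)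
  have nN: "card V \<le> N" using card_mono[OF _ IDN] card_image[OF inj] by simp
  have N1: "1 \<le> N" using n1 nN by simp
  have lgn: "0 \<le> log 2 (real (card V))" using n1 by simp
  have lgN: "0 \<le> log 2 (real N)" using N1 by simp
  show "\<exists>T :: nat.
          real T \<le> 100 * real (card V) * (log 2 (real (card V)) + 1) * (log 2 (real N) + 1) \<and>
          (\<forall>v\<in>V. a_out ALG (exec ALG N V E ID s m T v) = Some m) \<and>
          (\<forall>v\<in>V. real (energy ALG N V E ID s m T v)
                   \<le> 100 * (log 2 (real (card V)) + 1) * (log 2 (real N) + 1))"
  proof (cases "card V = 1")
    case True
    then obtain x where "V = {x}" using card_1_singletonE by blast
    then have Vs: "V = {s}" using sV by simp
    have "a_out ALG (exec ALG N V E ID s m 0 v) = Some m" if "v \<in> V" for v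
      using that Vs by (simp add: ALG_def init_def)
    moreover have "energy ALG N V E ID s m 0 v = 0" for v by (simp add: energy_def)
    moreover have "0 \<le> 100 * real (card V) * (log 2 (real (card V)) + 1) * (log 2 (real N) + 1)"
      using lgn lgN by simp
    moreover have "0 \<le> 100 * (log 2 (real (card V)) + 1) * (log 2 (real N) + 1)"
      using lgn lgN by simp
    ultimately show ?thesis by (intro exI[of _ 0]) simp
  next
    case False
    then have two: "2 \<le> card V" using n1 by simp
    define V' where "V' = ID ` V"
    define E' where "E' = (\<lambda>a b. \<exists>u\<in>V. \<exists>w\<in>V. ID u = a \<and> ID w = b \<and> E u w)"
    have cV': "card V' = card V" unfolding V'_def using inj by (rule card_image)
    have rn': "radio_network V' E'"
    proof -
      have Ein: "\<forall>u v. E u v \<longrightarrow> u \<in> V \<and> v \<in> V" "\<forall>u v. E u v \<longrightarrow> E v u" "\<forall>u. \<not> E u u"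
        "\<forall>u\<in>V. \<forall>v\<in>V. E\<^sup>*\<^sup>* u v" using rn by (auto simp: radio_network_def)
      have c: "E\<^sup>*\<^sup>* u w \<Longrightarrow> E'\<^sup>*\<^sup>* (ID u) (ID w)" for u w
      proof (induction rule: rtranclp_induct)
        case base then show ?case by simp
      next
        case (step y z)
        then have "E' (ID y) (ID z)" using Ein(1) unfolding E'_def by blast
        then show ?case using step by (meson rtranclp.rtrancl_into_rtrancl)
      qed
      have irr: "\<not> E' a a" for a
      proof
        assume "E' a a"
        then obtain u w where "u \<in> V" "w \<in> V" "ID u = a" "ID w = a" "E u w" unfolding E'_def by blast
        then have "u = w" using inj by (auto dest: inj_onD)
        then show False using \<open>E u w\<close> Ein(3) by blast
      qed
      have f1: "finite V'" "V' \<noteq> {}" using finV Vne by (auto simp: V'_def)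
      have f2: "\<forall>u v. E' u v \<longrightarrow> u \<in> V' \<and> v \<in> V'" unfolding E'_def V'_def by blast
      have f3: "\<forall>u v. E' u v \<longrightarrow> E' v u" using Ein(2) unfolding E'_def by blast
      have f4: "\<forall>u\<in>V'. \<forall>v\<in>V'. E'\<^sup>*\<^sup>* u v"
      proof (intro ballI)
        fix a b assume "a \<in> V'" "b \<in> V'"
        then obtain u w where "u \<in> V" "w \<in> V" "a = ID u" "b = ID w" by (auto simp: V'_def)
        then show "E'\<^sup>*\<^sup>* a b" using c Ein(4) by blast
      qed
      show ?thesis unfolding radio_network_def using f1 f2 f3 f4 irr by blast
    qed
    have VN': "V' \<subseteq> {1..N}" using IDN by (simp add: V'_def)
    have two': "2 \<le> card V'" using two cV' by simp
    have sV': "ID s \<in> V'" using sV by (simp add: V'_def)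
    obtain T where T: "T = 2 * nbits (card V') * RLn (card V') N"
      "\<forall>w\<in>V'. a_out ALG (exec ALG N V' E' (\<lambda>x. x) (ID s) m T w) = Some m"
      "\<forall>w\<in>V'. energy ALG N V' E' (\<lambda>x. x) (ID s) m T w \<le> 2 * nbits (card V') * (2 * nbits N + (2 * nbits N + 1) * 5)"
      using main_net[OF rn' VN' two' sV', of m] by blast
    have rel: "v \<in> V \<Longrightarrow> exec ALG N V E ID s m t v = exec ALG N V' E' (\<lambda>x. x) (ID s) m t (ID v)" for v t
      unfolding V'_def E'_def by (rule exec_relabel[OF inj finV sV])
    have out: "\<forall>v\<in>V. a_out ALG (exec ALG N V E ID s m T v) = Some m"
      using T(2) rel unfolding V'_def by auto
    have enEq: "energy ALG N V E ID s m T v = energy ALG N V' E' (\<lambda>x. x) (ID s) m T (ID v)" if "v \<in> V" for v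
      using rel[OF that] by (simp add: energy_def)
    define n where "n = card V"
    define L where "L = nbits N"
    define Rn where "Rn = nbits n"
    have L1: "1 \<le> L" using nbits_pos[OF N1] by (simp add: L_def)
    have Rlog: "real Rn \<le> log 2 (real n) + 1" using nbits_log n1 by (simp add: Rn_def n_def)
    have Llog: "real L \<le> log 2 (real N) + 1" using nbits_log[OF N1] by (simp add: L_def)
    have RL: "RLn n N \<le> 11 * L * n"
    proof -
      have "RLn n N = 2 * L + (2 * L + 1) * (2 * n + 1)" by (simp add: RLn_def SLn_def L_def)
      also have "\<dots> \<le> 2 * L + (3 * L) * (3 * n)" using L1 n1 two
        by (intro add_le_mono mult_le_mono) (auto simp: n_def)
      also have "\<dots> \<le> 11 * L * n" using two by (simp add: n_def)
      finally show ?thesis .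
    qed
    have "T = 2 * Rn * RLn n N" using T(1) cV' by (simp add: Rn_def n_def)
    also have "\<dots> \<le> 2 * Rn * (11 * L * n)" by (rule mult_le_mono2[OF RL])
    also have "\<dots> = 22 * Rn * L * n" by simp
    finally have Tn: "T \<le> 22 * Rn * L * n" .
    have "real T \<le> 22 * real Rn * real L * real n" using Tn by (metis of_nat_le_iff of_nat_mult of_nat_numeral)
    also have "\<dots> \<le> 22 * (log 2 (real n) + 1) * (log 2 (real N) + 1) * real n"
      using Rlog Llog by (intro mult_mono) auto
    also have "\<dots> \<le> 100 * real (card V) * (log 2 (real (card V)) + 1) * (log 2 (real N) + 1)"
    proof -
      define X where "X = (log 2 (real n) + 1) * (log 2 (real N) + 1) * real n"
      have X0: "0 \<le> X" using lgn lgN by (simp add: X_def n_def)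
      have e1: "22 * (log 2 (real n) + 1) * (log 2 (real N) + 1) * real n = 22 * X" by (simp add: X_def mult.assoc)
      have e2: "100 * real (card V) * (log 2 (real (card V)) + 1) * (log 2 (real N) + 1) = 100 * X"
        by (simp add: X_def n_def mult_ac)
      show ?thesis unfolding e1 e2 using X0 by simp
    qed
    finally have time: "real T \<le> 100 * real (card V) * (log 2 (real (card V)) + 1) * (log 2 (real N) + 1)" .
    have energy: "real (energy ALG N V E ID s m T v) \<le> 100 * (log 2 (real (card V)) + 1) * (log 2 (real N) + 1)"
      if v: "v \<in> V" for v
    proof -
      have "energy ALG N V E ID s m T v \<le> 2 * Rn * (2 * L + (2 * L + 1) * 5)"
        using enEq[OF v] T(3) v cV' by (auto simp: V'_def Rn_def n_def L_def)
      also have "\<dots> \<le> 34 * Rn * L" using L1 by simp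
      finally have "real (energy ALG N V E ID s m T v) \<le> 34 * real Rn * real L"
        by (metis of_nat_le_iff of_nat_mult of_nat_numeral)
      also have "\<dots> \<le> 34 * (log 2 (real n) + 1) * (log 2 (real N) + 1)"
        using Rlog Llog by (intro mult_mono) auto
      also have "\<dots> \<le> 100 * (log 2 (real (card V)) + 1) * (log 2 (real N) + 1)"
      proof -
        define X where "X = (log 2 (real n) + 1) * (log 2 (real N) + 1)"
        have X0: "0 \<le> X" using lgn lgN by (simp add: X_def n_def)
        have e1: "34 * (log 2 (real n) + 1) * (log 2 (real N) + 1) = 34 * X" by (simp add: X_def mult.assoc)
        have e2: "100 * (log 2 (real (card V)) + 1) * (log 2 (real N) + 1) = 100 * X"
          by (simp add: X_def n_def mult.assoc)
        show ?thesis unfolding e1 e2 using X0 by simp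
      qed
      finally show ?thesis .
    qed
    show ?thesis using time out energy by blast
  qed
qed


end
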